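(* Fix integers $n \ge 3$, $1 \le i < j \le n-1$, and positive integers $e_1, \ldots, e_{n-1}$. For a prime $p$ and integers $a_{rs}$ ($1 \le r < s \le n-1$) with $0 \le a_{rs} < p^{e_r - 1}$, let $A = A(p,(a_{rs}))$ be the $n\times n$ upper triangular integer matrix with $A_{rr} = p^{e_r}$ for $r < n$, $A_{nn} = 1$, $A_{rs} = p\,a_{rs}$ for $1 \le r < s \le n-1$, last column $(1,\ldots,1)^T$, and zeros below the diagonal; denote its columns by $v_1, \ldots, v_n$. Then the number of choices of the variables $\{a_{rs} : 1 \le r < s \le i\} \cup \{a_{rj} : 1 \le r \le i\}$ (each with $0 \le a_{rs} < p^{e_r-1}$) such that $v_i \circ v_j$ lies in the $\mathbb{Z}$-column span of $A$ is a polynomial in $p$; that is, there is $P \in \mathbb{Q}[x]$ (depending on $n,i,j,e_1,\ldots,e_{n-1}$) with this number equal to $P(p)$ for every prime $p$.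
   Context: For vectors $x=(x_1,\ldots,x_n)^T$, $y=(y_1,\ldots,y_n)^T$, $x \circ y = (x_1y_1, \ldots, x_ny_n)^T$ denotes the componentwise product. The condition $v_i \circ v_j \in \mathrm{Col}(A)$ means $v_i\circ v_j = A x$ for some $x \in \mathbb{Z}^n$; it only involves the listed variables. *)

theory Defs
  imports Main "HOL-Computational_Algebra.Polynomial" "HOL-Computational_Algebra.Primes"
begin

text \<open>Indices are 1-based. The entry A_{rs} of the n x n matrix A(p,(a_{rs})).\<close>
definition Amat :: "nat \<Rightarrow> nat \<Rightarrow> (nat \<Rightarrow> nat) \<Rightarrow> (nat \<Rightarrow> nat \<Rightarrow> int) \<Rightarrow> nat \<Rightarrow> nat \<Rightarrow> int" where
  "Amat n p e a r s =
     (if s = n then 1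
      else if r = s then int p ^ e r
      else if r < s then int p * a r s
      else 0)"

text \<open>Column k of A is v_k, i.e. (v_k)_r = A r k.
  w lies in the Z-column span of A.\<close>
definition in_col_span :: "nat \<Rightarrow> (nat \<Rightarrow> nat \<Rightarrow> int) \<Rightarrow> (nat \<Rightarrow> int) \<Rightarrow> bool" where
  "in_col_span n A w \<longleftrightarrow>
     (\<exists>x :: nat \<Rightarrow> int. \<forall>r\<in>{1..n}. w r = (\<Sum>s=1..n. A r s * x s))"

definition full_assign :: "nat \<Rightarrow> nat \<Rightarrow> (nat \<Rightarrow> nat) \<Rightarrow> (nat \<Rightarrow> nat \<Rightarrow> int) set" where
  "full_assign n p e =
     {a. (\<forall>r s. 1 \<le> r \<and> r < s \<and> s \<le> n - 1 \<longrightarrow> 0 \<le> a r s \<and> a r s < int p ^ (e r - 1)) \<and>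
         (\<forall>r s. \<not> (1 \<le> r \<and> r < s \<and> s \<le> n - 1) \<longrightarrow> a r s = 0)}"

definition listed_vars :: "nat \<Rightarrow> nat \<Rightarrow> (nat \<times> nat) set" where
  "listed_vars i j = {(r, s). 1 \<le> r \<and> r < s \<and> s \<le> i} \<union> {(r, s). s = j \<and> 1 \<le> r \<and> r \<le> i}"

definition restrict_vars :: "(nat \<times> nat) set \<Rightarrow> (nat \<Rightarrow> nat \<Rightarrow> int) \<Rightarrow> (nat \<Rightarrow> nat \<Rightarrow> int)" where
  "restrict_vars L a = (\<lambda>r s. if (r, s) \<in> L then a r s else 0)"

text \<open>Since the condition only involves the listed
  variables, a choice counts iff it extends to some admissible full assignment
  satisfying the condition.\<close>
definition good_choices :: "nat \<Rightarrow> nat \<Rightarrow> nat \<Rightarrow> (nat \<Rightarrow> nat) \<Rightarrow> nat \<Rightarrow> (nat \<Rightarrow> nat \<Rightarrow> int) set" where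
  "good_choices n i j e p =
     restrict_vars (listed_vars i j) `
       {a \<in> full_assign n p e.
          in_col_span n (Amat n p e a) (\<lambda>r. Amat n p e a r i * Amat n p e a r j)}"

end

theory Submission
  imports Defs "HOL-Library.FuncSet"
begin


definition vc :: "nat \<Rightarrow> nat \<Rightarrow> int \<Rightarrow> nat" where
  "vc p L z = Max {m. m \<le> L \<and> int p ^ m dvd z}"

lemma vc_fin: "finite {m. m \<le> L \<and> int p ^ m dvd z}"
  by (rule finite_subset[of _ "{..L}"]) auto

lemma vc_mem: "vc p L z \<in> {m. m \<le> L \<and> int p ^ m dvd z}"
  unfolding vc_def by (rule Max_in[OF vc_fin]) (auto intro: exI[of _ 0])

lemma vc_le: "vc p L z \<le> L" using vc_mem by auto
lemma vc_dvd: "int p ^ vc p L z dvd z" using vc_mem by auto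

lemma vc_ge: "m \<le> L \<Longrightarrow> (m \<le> vc p L z \<longleftrightarrow> int p ^ m dvd z)"
proof
  assume "m \<le> vc p L z"
  then have "int p ^ m dvd int p ^ vc p L z" by (rule le_imp_power_dvd)
  then show "int p ^ m dvd z" using vc_dvd dvd_trans by blast
next
  assume "m \<le> L" "int p ^ m dvd z"
  then show "m \<le> vc p L z" unfolding vc_def by (intro Max_ge[OF vc_fin]) auto
qed

lemma vc_eqI:
  assumes "t \<le> L" "\<And>m. m \<le> L \<Longrightarrow> (int p ^ m dvd z \<longleftrightarrow> m \<le> t)"
  shows "vc p L z = t"
proof -
  have "t \<le> vc p L z" using assms vc_ge by blast
  moreover have "vc p L z \<le> t" using assms(2)[OF vc_le] vc_dvd by blast
  ultimately show ?thesis by simp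
qed

lemma vc_cong:
  assumes "\<And>m. m \<le> L \<Longrightarrow> (int p ^ m dvd z \<longleftrightarrow> int p ^ m dvd z')"
  shows "vc p L z = vc p L z'"
proof (rule vc_eqI)
  show "vc p L z' \<le> L" by (rule vc_le)
  fix m assume "m \<le> L"
  then show "int p ^ m dvd z \<longleftrightarrow> m \<le> vc p L z'" using assms vc_ge by blast
qed

lemma vc_mod:
  assumes "int p ^ L dvd z - z'"
  shows "vc p L z = vc p L z'"
proof (rule vc_cong)
  fix m assume "m \<le> L"
  then have "int p ^ m dvd int p ^ L" by (rule le_imp_power_dvd)
  then have h: "int p ^ m dvd z - z'" using assms by (rule dvd_trans)
  show "int p ^ m dvd z \<longleftrightarrow> int p ^ m dvd z'"
  proof
    assume "int p ^ m dvd z" then show "int p ^ m dvd z'" using h dvd_diff[of _ z "z - z'"] by simp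
  next
    assume "int p ^ m dvd z'" then show "int p ^ m dvd z" using h dvd_add[of _ "z - z'" z'] by simp
  qed
qed

lemma vc_min: assumes "L' \<le> L" shows "vc p L' z = min L' (vc p L z)"
proof (rule vc_eqI)
  fix m assume "m \<le> L'"
  then show "int p ^ m dvd z \<longleftrightarrow> m \<le> min L' (vc p L z)" using assms vc_ge[of m L p z] by auto
qed simp

lemma vc_uminus: "vc p L (- z) = vc p L z"
  by (rule vc_cong) simp

lemma vc_zero: "vc p L 0 = L"
  by (rule vc_eqI) auto

lemma vc_lt: "vc p L z < L \<Longrightarrow> \<not> int p ^ (Suc (vc p L z)) dvd z"
  using vc_ge[of "Suc (vc p L z)" L p z] by auto

lemma prime_pow_dvd_iff:
  assumes "prime p" "\<not> int p dvd y"
  shows "int p ^ m dvd int p ^ s * y \<longleftrightarrow> m \<le> s"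
proof
  assume h: "int p ^ m dvd int p ^ s * y"
  show "m \<le> s"
  proof (rule ccontr)
    assume "\<not> m \<le> s"
    then have "int p ^ Suc s dvd int p ^ m" by (intro le_imp_power_dvd) simp
    then have "int p ^ s * int p dvd int p ^ s * y" using h dvd_trans by (metis power_Suc2)
    moreover have "int p ^ s \<noteq> 0" using assms(1) by (simp add: prime_gt_0_nat)
    ultimately have "int p dvd y" by (metis dvd_mult_cancel_left mult_eq_0_iff)
    with assms show False by simp
  qed
next
  assume "m \<le> s" then show "int p ^ m dvd int p ^ s * y"
    by (simp add: le_imp_power_dvd)
qed

lemma vc_split:
  assumes "prime p" "vc p C c < C"
  obtains c' where "c = int p ^ vc p C c * c'" "\<not> int p dvd c'"
proof -
  obtain c' where c: "c = int p ^ vc p C c * c'" using vc_dvd by (metis dvd_def)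
  have "\<not> int p dvd c'"
  proof
    assume "int p dvd c'"
    then have "int p ^ Suc (vc p C c) dvd c" by (subst c) (simp add: mult_dvd_mono)
    with vc_lt[OF assms(2)] show False by simp
  qed
  with c that show ?thesis by blast
qed

lemma vc_mult:
  assumes "prime p" "L \<le> C"
  shows "vc p L (int p ^ a * c * d) = min L (a + vc p C c + vc p C d)"
proof (cases "vc p C c < C \<and> vc p C d < C")
  case True
  obtain c' where c: "c = int p ^ vc p C c * c'" "\<not> int p dvd c'" using vc_split assms True by blast
  obtain d' where d: "d = int p ^ vc p C d * d'" "\<not> int p dvd d'" using vc_split assms True by blast
  have pp: "prime (int p)" using assms by simp
  have nd: "\<not> int p dvd c' * d'" using c(2) d(2) pp by (simp add: prime_dvd_mult_iff)
  define u where "u = vc p C c"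
  define w where "w = vc p C d"
  have eq: "int p ^ a * c * d = int p ^ (a + u + w) * (c' * d')"
  proof -
    have "int p ^ a * c * d = int p ^ a * (int p ^ u * c') * (int p ^ w * d')"
      using c(1)[folded u_def] d(1)[folded w_def] by simp
    also have "\<dots> = int p ^ (a + u + w) * (c' * d')" by (simp add: power_add algebra_simps)
    finally show ?thesis .
  qed
  show ?thesis
    unfolding u_def[symmetric] w_def[symmetric] eq
  proof (rule vc_eqI)
    fix m assume "m \<le> L"
    show "int p ^ m dvd int p ^ (a + u + w) * (c' * d') \<longleftrightarrow> m \<le> min L (a + u + w)"
      using prime_pow_dvd_iff[OF assms(1) nd, of m "a+u+w"] \<open>m \<le> L\<close> by auto
  qed simp
next
  case False
  then have "vc p C c = C \<or> vc p C d = C" using vc_le[of p C c] vc_le[of p C d] by linarith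
  then have cd: "int p ^ C dvd c \<or> int p ^ C dvd d" using vc_dvd[of p C c] vc_dvd[of p C d] by auto
  have h: "int p ^ m dvd int p ^ a * c * d" if "m \<le> L" for m
  proof -
    have "int p ^ m dvd int p ^ C" using that assms(2) by (intro le_imp_power_dvd) simp
    then have "int p ^ m dvd c \<or> int p ^ m dvd d" using cd dvd_trans by blast
    then show ?thesis by (metis dvd_mult dvd_mult2 mult.assoc)
  qed
  have "min L (a + vc p C c + vc p C d) = L"
    using \<open>vc p C c = C \<or> vc p C d = C\<close> assms(2) by auto
  then show ?thesis using h by (intro vc_eqI) auto
qed

definition PF :: "(nat \<Rightarrow> rat) \<Rightarrow> bool" where
  "PF f \<longleftrightarrow> (\<exists>P. \<forall>p. prime p \<longrightarrow> f p = poly P (of_nat p))"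

lemma PF_const: "PF (\<lambda>p. c)"
  unfolding PF_def by (rule exI[of _ "[:c:]"]) simp

lemma PF_id: "PF (\<lambda>p. of_nat p)"
  unfolding PF_def by (rule exI[of _ "[:0,1:]"]) simp

lemma PF_add: "PF f \<Longrightarrow> PF g \<Longrightarrow> PF (\<lambda>p. f p + g p)"
proof -
  assume "PF f" "PF g"
  then obtain P Q where "\<forall>p. prime p \<longrightarrow> f p = poly P (of_nat p)" "\<forall>p. prime p \<longrightarrow> g p = poly Q (of_nat p)"
    unfolding PF_def by blast
  then show ?thesis unfolding PF_def by (intro exI[of _ "P + Q"]) simp
qed

lemma PF_diff: "PF f \<Longrightarrow> PF g \<Longrightarrow> PF (\<lambda>p. f p - g p)"
proof -
  assume "PF f" "PF g"
  then obtain P Q where "\<forall>p. prime p \<longrightarrow> f p = poly P (of_nat p)" "\<forall>p. prime p \<longrightarrow> g p = poly Q (of_nat p)"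
    unfolding PF_def by blast
  then show ?thesis unfolding PF_def by (intro exI[of _ "P - Q"]) simp
qed

lemma PF_mult: "PF f \<Longrightarrow> PF g \<Longrightarrow> PF (\<lambda>p. f p * g p)"
proof -
  assume "PF f" "PF g"
  then obtain P Q where "\<forall>p. prime p \<longrightarrow> f p = poly P (of_nat p)" "\<forall>p. prime p \<longrightarrow> g p = poly Q (of_nat p)"
    unfolding PF_def by blast
  then show ?thesis unfolding PF_def by (intro exI[of _ "P * Q"]) simp
qed

lemma PF_power: "PF f \<Longrightarrow> PF (\<lambda>p. f p ^ k)"
proof (induction k)
  case 0 then show ?case using PF_const by simp
next
  case (Suc k) then show ?case using PF_mult[of f "\<lambda>p. f p ^ k"] by simp
qed

lemma PF_sum: "finite A \<Longrightarrow> (\<And>x. x \<in> A \<Longrightarrow> PF (f x)) \<Longrightarrow> PF (\<lambda>p. \<Sum>x\<in>A. f x p)"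
proof (induction A rule: finite_induct)
  case empty then show ?case using PF_const by simp
next
  case (insert x F) then show ?case using PF_add[of "f x" "\<lambda>p. \<Sum>x\<in>F. f x p"] by simp
qed

lemma PF_if: "PF f \<Longrightarrow> PF g \<Longrightarrow> PF (\<lambda>p. if b then f p else g p)"
  by (cases b) simp_all

lemma PF_cong: "PF f \<Longrightarrow> (\<And>p. prime p \<Longrightarrow> f p = g p) \<Longrightarrow> PF g"
proof -
  assume "PF f" "\<And>p. prime p \<Longrightarrow> f p = g p"
  then show ?thesis unfolding PF_def by auto
qed

lemma PF_choice:
  assumes "\<And>x. PF (f x)"
  shows "\<exists>Q. \<forall>x p. prime p \<longrightarrow> f x p = poly (Q x) (of_nat p)"
proof -
  have "\<forall>x. \<exists>P. \<forall>p. prime p \<longrightarrow> f x p = poly P (of_nat p)" using assms unfolding PF_def by blast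
  then show ?thesis by (rule choice)
qed



definition Fs :: "(nat \<times> nat) set \<Rightarrow> (nat \<Rightarrow> int) \<Rightarrow> (nat \<Rightarrow> nat \<Rightarrow> int) set" where
  "Fs I bd = {f. (\<forall>r s. (r, s) \<in> I \<longrightarrow> 0 \<le> f r s \<and> f r s < bd r) \<and> (\<forall>r s. (r, s) \<notin> I \<longrightarrow> f r s = 0)}"

definition rs :: "(nat \<times> nat) set \<Rightarrow> (nat \<Rightarrow> nat \<Rightarrow> int) \<Rightarrow> (nat \<Rightarrow> nat \<Rightarrow> int)" where
  "rs I f = (\<lambda>r s. if (r, s) \<in> I then f r s else 0)"

definition padd :: "(nat \<Rightarrow> nat \<Rightarrow> int) \<Rightarrow> (nat \<Rightarrow> nat \<Rightarrow> int) \<Rightarrow> (nat \<Rightarrow> nat \<Rightarrow> int)" where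
  "padd f g = (\<lambda>r s. f r s + g r s)"

definition pt :: "nat \<Rightarrow> nat \<Rightarrow> int \<Rightarrow> (nat \<Rightarrow> nat \<Rightarrow> int)" where
  "pt r s y = (\<lambda>r' s'. if r' = r \<and> s' = s then y else 0)"

lemma Fs_range: "f \<in> Fs J bd \<Longrightarrow> (r, s) \<in> J \<Longrightarrow> 0 \<le> f r s \<and> f r s < bd r"
  by (simp add: Fs_def)

lemma Fs_finite: assumes "finite I" shows "finite (Fs I bd)"
proof -
  let ?G = "\<lambda>v. (\<lambda>r s. if (r, s) \<in> I then v (r, s) else 0 :: int)"
  have "Fs I bd \<subseteq> ?G ` (PiE I (\<lambda>q. {0..<bd (fst q)}))"
  proof
    fix f assume f: "f \<in> Fs I bd"
    define v :: "nat \<times> nat \<Rightarrow> int" where "v = restrict (\<lambda>q. f (fst q) (snd q)) I"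
    have "v \<in> PiE I (\<lambda>q. {0..<bd (fst q)})" unfolding v_def restrict_PiE_iff
    proof
      fix q assume "q \<in> I"
      then show "f (fst q) (snd q) \<in> {0..<bd (fst q)}" using Fs_range[OF f, of "fst q" "snd q"] by simp
    qed
    moreover have "f = ?G v" using f by (auto simp: Fs_def fun_eq_iff v_def)
    ultimately show "f \<in> ?G ` (PiE I (\<lambda>q. {0..<bd (fst q)}))" by blast
  qed
  moreover have "finite (PiE I (\<lambda>q. {0..<bd (fst q)}))" using assms by (intro finite_PiE) auto
  ultimately show ?thesis using finite_subset by blast
qed

lemma Fs_zero: "f \<in> Fs J bd \<Longrightarrow> (r, s) \<notin> J \<Longrightarrow> f r s = 0"
  by (simp add: Fs_def)

lemma padd_Fs:
  assumes "I \<inter> J = {}" "f1 \<in> Fs I bd" "f2 \<in> Fs J bd"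
  shows "padd f1 f2 \<in> Fs (I \<union> J) bd"
proof -
  have A: "0 \<le> f1 r s + f2 r s \<and> f1 r s + f2 r s < bd r" if h: "(r, s) \<in> I \<union> J" for r s
  proof (cases "(r, s) \<in> I")
    case True
    then have "(r, s) \<notin> J" using assms(1) by blast
    then show ?thesis using True Fs_zero[OF assms(3)] Fs_range[OF assms(2)] by auto
  next
    case False
    then have "(r, s) \<in> J" using h by blast
    then show ?thesis using False Fs_zero[OF assms(2)] Fs_range[OF assms(3)] by auto
  qed
  have B: "f1 r s + f2 r s = 0" if "(r, s) \<notin> I \<union> J" for r s
    using that Fs_zero[OF assms(2)] Fs_zero[OF assms(3)] by auto
  show ?thesis unfolding Fs_def padd_def using A B by blast
qed

lemma rs_padd1:
  assumes "I \<inter> J = {}" "f1 \<in> Fs I bd" "f2 \<in> Fs J bd"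
  shows "rs I (padd f1 f2) = f1"
proof (intro ext)
  fix r s show "rs I (padd f1 f2) r s = f1 r s"
  proof (cases "(r, s) \<in> I")
    case True
    then have "(r, s) \<notin> J" using assms(1) by blast
    then show ?thesis using True Fs_zero[OF assms(3)] by (simp add: rs_def padd_def)
  next
    case False
    then show ?thesis using Fs_zero[OF assms(2)] by (simp add: rs_def padd_def)
  qed
qed

lemma rs_padd2:
  assumes "I \<inter> J = {}" "f1 \<in> Fs I bd" "f2 \<in> Fs J bd"
  shows "rs J (padd f1 f2) = f2"
proof -
  have "padd f1 f2 = padd f2 f1" by (auto simp: padd_def fun_eq_iff)
  moreover have "J \<inter> I = {}" using assms(1) by blast
  ultimately show ?thesis using rs_padd1[of J I f2 bd f1] assms by simp
qed

lemma rs_Fs: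
  assumes "b \<in> Fs K bd" "I \<subseteq> K"
  shows "rs I b \<in> Fs I bd"
  using assms unfolding Fs_def rs_def by auto

lemma padd_rs:
  assumes "I \<inter> J = {}" "b \<in> Fs (I \<union> J) bd"
  shows "padd (rs I b) (rs J b) = b"
proof (intro ext)
  fix r s show "padd (rs I b) (rs J b) r s = b r s"
    using Fs_zero[OF assms(2), of r s] assms(1)
    by (cases "(r, s) \<in> I"; cases "(r, s) \<in> J") (auto simp: padd_def rs_def)
qed

lemma Fs_union_sum:
  assumes "I \<inter> J = {}"
  shows "(\<Sum>f\<in>Fs (I \<union> J) bd. \<phi> f) = (\<Sum>f1\<in>Fs I bd. \<Sum>f2\<in>Fs J bd. \<phi> (padd f1 f2))"
proof -
  have "(\<Sum>f1\<in>Fs I bd. \<Sum>f2\<in>Fs J bd. \<phi> (padd f1 f2)) = (\<Sum>(f1, f2)\<in>Fs I bd \<times> Fs J bd. \<phi> (padd f1 f2))"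
    by (rule sum.cartesian_product)
  also have "\<dots> = (\<Sum>f\<in>Fs (I \<union> J) bd. \<phi> f)"
  proof (rule sum.reindex_bij_witness[of _ "\<lambda>f. (rs I f, rs J f)" "\<lambda>(f1, f2). padd f1 f2"])
    fix a assume "a \<in> Fs I bd \<times> Fs J bd"
    then show "(rs I (case a of (f1, f2) \<Rightarrow> padd f1 f2), rs J (case a of (f1, f2) \<Rightarrow> padd f1 f2)) = a"
      using assms rs_padd1 rs_padd2 by (cases a) auto
  next
    fix a assume "a \<in> Fs I bd \<times> Fs J bd"
    then show "(case a of (f1, f2) \<Rightarrow> padd f1 f2) \<in> Fs (I \<union> J) bd"
      using assms padd_Fs by (cases a) auto
  next
    fix b assume "b \<in> Fs (I \<union> J) bd"
    then show "(case (rs I b, rs J b) of (f1, f2) \<Rightarrow> padd f1 f2) = b"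
      using padd_rs assms by simp
  next
    fix b assume "b \<in> Fs (I \<union> J) bd"
    then show "(rs I b, rs J b) \<in> Fs I bd \<times> Fs J bd"
      using rs_Fs by auto
  next
    fix a assume "a \<in> Fs I bd \<times> Fs J bd"
    then show "\<phi> (case a of (f1, f2) \<Rightarrow> padd f1 f2) = (case a of (f1, f2) \<Rightarrow> \<phi> (padd f1 f2))"
      by (cases a) auto
  qed
  finally show ?thesis by simp
qed

lemma Fs_single_sum:
  "(\<Sum>f\<in>Fs {(r, s)} bd. \<phi> f) = (\<Sum>y\<in>{0..<bd r}. \<phi> (pt r s y))"
proof (rule sum.reindex_bij_witness[of _ "pt r s" "\<lambda>f. f r s"])
  fix a assume "a \<in> Fs {(r, s)} bd"
  then show "pt r s (a r s) = a" by (auto simp: Fs_def pt_def fun_eq_iff)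
next
  fix a assume "a \<in> Fs {(r, s)} bd"
  then show "a r s \<in> {0..<bd r}" by (auto simp: Fs_def)
next
  fix a assume "a \<in> Fs {(r, s)} bd"
  then have "pt r s (a r s) = a" by (auto simp: Fs_def pt_def fun_eq_iff)
  then show "\<phi> (pt r s (a r s)) = \<phi> a" by simp
next
  fix b assume "b \<in> {0..<bd r}"
  then show "pt r s b r s = b" by (simp add: pt_def)
next
  fix b assume "b \<in> {0..<bd r}"
  then show "pt r s b \<in> Fs {(r, s)} bd" by (auto simp: Fs_def pt_def)
qed

lemma Fs_empty: "Fs {} bd = {\<lambda>_ _. 0}"
  by (auto simp: Fs_def fun_eq_iff)

lemma Fs_card_row:
  assumes "finite I" "\<And>q. q \<in> I \<Longrightarrow> fst q = r" "0 \<le> bd r"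
  shows "int (card (Fs I bd)) = bd r ^ card I"
  using assms
proof (induction I rule: finite_induct)
  case empty
  then show ?case by (simp add: Fs_empty)
next
  case (insert q I)
  have "fst q = r" using insert.prems(1) by simp
  then obtain s where q: "q = (r, s)" by (metis prod.collapse)
  have "card (Fs (insert q I) bd) = (\<Sum>f\<in>Fs ({q} \<union> I) bd. 1)" by simp
  also have "\<dots> = (\<Sum>f1\<in>Fs {q} bd. \<Sum>f2\<in>Fs I bd. 1)"
    by (rule Fs_union_sum) (use insert in auto)
  also have "\<dots> = card (Fs {q} bd) * card (Fs I bd)" by simp
  finally have "int (card (Fs (insert q I) bd)) = int (card (Fs {q} bd)) * int (card (Fs I bd))" by simp
  moreover have "card (Fs {q} bd) = (\<Sum>y\<in>{0..<bd r}. (1::nat))" unfolding q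
    using Fs_single_sum[where \<phi>="\<lambda>_. (1::nat)" and r=r and s=s and bd=bd] by simp
  moreover have "int (\<Sum>y\<in>{0..<bd r}. (1::nat)) = bd r" using insert.prems by simp
  ultimately show ?case using insert by simp
qed



lemma sum_group_card:
  assumes "finite S" "finite W" "f ` S \<subseteq> W"
  shows "(\<Sum>x\<in>S. h (f x)) = (\<Sum>w\<in>W. of_nat (card {x\<in>S. f x = w}) * h w)"
proof -
  have "(\<Sum>x\<in>S. h (f x)) = (\<Sum>w\<in>W. \<Sum>x\<in>{x. x \<in> S \<and> f x = w}. h (f x))"
    using sum.group[OF assms, of "\<lambda>x. h (f x)"] by simp
  also have "\<dots> = (\<Sum>w\<in>W. of_nat (card {x\<in>S. f x = w}) * h w)"
    by (intro sum.cong refl) simp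
  finally show ?thesis .
qed

lemma card_dvd_range:
  assumes "prime p" "m \<le> g"
  shows "card {y\<in>{0..<int p ^ g}. int p ^ m dvd y} = p ^ (g - m)"
proof -
  have pos: "0 < int p ^ m" using assms by (simp add: prime_gt_0_nat)
  have eqg: "int p ^ g = int p ^ m * int p ^ (g - m)" using assms(2) by (simp add: power_add[symmetric])
  have "{y\<in>{0..<int p ^ g}. int p ^ m dvd y} = (\<lambda>t. int p ^ m * t) ` {0..<int p ^ (g - m)}"
  proof (intro set_eqI iffI)
    fix y assume "y \<in> {y\<in>{0..<int p ^ g}. int p ^ m dvd y}"
    then have yy: "int p ^ m dvd y" "0 \<le> y" "y < int p ^ g" by auto
    then obtain t where "y = int p ^ m * t" by (auto elim: dvdE)
    with yy have y: "y = int p ^ m * t" "0 \<le> y" "y < int p ^ g" by auto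
    have "0 \<le> t" using y pos by (simp add: zero_le_mult_iff)
    moreover have "t < int p ^ (g - m)" using y pos eqg by (metis mult_less_cancel_left_pos)
    ultimately show "y \<in> (\<lambda>t. int p ^ m * t) ` {0..<int p ^ (g - m)}" using y by auto
  next
    fix y assume "y \<in> (\<lambda>t. int p ^ m * t) ` {0..<int p ^ (g - m)}"
    then obtain t where t0: "t \<in> {0..<int p ^ (g - m)}" "y = int p ^ m * t" by blast
    then have t: "y = int p ^ m * t" "0 \<le> t" "t < int p ^ (g - m)" by auto
    then show "y \<in> {y\<in>{0..<int p ^ g}. int p ^ m dvd y}" using pos eqg by auto
  qed
  moreover have "inj_on (\<lambda>t. int p ^ m * t) {0..<int p ^ (g - m)}" using pos by (auto simp: inj_on_def)
  ultimately have "card {y\<in>{0..<int p ^ g}. int p ^ m dvd y} = card {0..<int p ^ (g - m)}"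
    by (simp add: card_image)
  also have "\<dots> = p ^ (g - m)" by (simp add: nat_power_eq)
  finally show ?thesis .
qed

lemma card_dvd_shift:
  assumes "prime p" "m \<le> g"
  shows "card {b\<in>{0..<int p ^ g}. int p ^ m dvd (b - z)} = p ^ (g - m)"
proof -
  let ?S = "{0..<int p ^ g}"
  let ?h = "\<lambda>b. (b - z) mod int p ^ g"
  have pos: "0 < int p ^ g" using assms by (simp add: prime_gt_0_nat)
  have inj: "inj_on ?h ?S"
  proof (rule inj_onI)
    fix a b assume a: "a \<in> ?S" and b: "b \<in> ?S" and e: "?h a = ?h b"
    then have "int p ^ g dvd (a - z) - (b - z)" by (simp add: mod_eq_dvd_iff)
    then have "a mod int p ^ g = b mod int p ^ g" by (simp add: mod_eq_dvd_iff)
    then show "a = b" using a b by simp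
  qed
  have img: "?h ` ?S = ?S"
  proof -
    have "?h ` ?S \<subseteq> ?S" using pos by auto
    moreover have "card (?h ` ?S) = card ?S" using inj by (simp add: card_image)
    ultimately show ?thesis by (intro card_subset_eq) auto
  qed
  have md: "int p ^ m dvd (b - z) \<longleftrightarrow> int p ^ m dvd ?h b" for b
  proof -
    have "int p ^ m dvd int p ^ g" using assms(2) by (rule le_imp_power_dvd)
    then show ?thesis by (simp add: dvd_mod_iff)
  qed
  have e1: "{b\<in>?S. int p ^ m dvd (b - z)} = {b\<in>?S. int p ^ m dvd ?h b}" using md by auto
  have e2: "card {b\<in>?S. int p ^ m dvd ?h b} = card (?h ` {b\<in>?S. int p ^ m dvd ?h b})"
    by (rule card_image[symmetric]) (rule inj_on_subset[OF inj], auto)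
  have e3: "?h ` {b\<in>?S. int p ^ m dvd ?h b} = {y\<in>?S. int p ^ m dvd y}"
  proof (intro set_eqI iffI)
    fix y assume "y \<in> ?h ` {b\<in>?S. int p ^ m dvd ?h b}"
    then show "y \<in> {y\<in>?S. int p ^ m dvd y}" using img by blast
  next
    fix y assume y: "y \<in> {y\<in>?S. int p ^ m dvd y}"
    then have "y \<in> ?h ` ?S" using img by simp
    then obtain b where "b \<in> ?S" "y = ?h b" by blast
    then show "y \<in> ?h ` {b\<in>?S. int p ^ m dvd ?h b}" using y by blast
  qed
  show ?thesis unfolding e1 e2 e3 by (rule card_dvd_range[OF assms])
qed

lemma sum_vc_shift:
  fixes h :: "nat \<Rightarrow> 'a::comm_ring_1"
  assumes "prime p" "g \<le> C"
  shows "(\<Sum>b\<in>{0..<int p ^ g}. h (vc p C (b - z)))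
       = (\<Sum>w<g. (of_nat (p ^ (g - w)) - of_nat (p ^ (g - Suc w))) * h w)
         + h (vc p C (z mod int p ^ g - z))"
proof -
  let ?S = "{0..<int p ^ g}"
  define b0 where "b0 = z mod int p ^ g"
  have pos: "0 < int p ^ g" using assms by (simp add: prime_gt_0_nat)
  have b0S: "b0 \<in> ?S" using pos by (simp add: b0_def)
  have small: "vc p C (b - z) < g" if "b \<in> ?S" "b \<noteq> b0" for b
  proof (rule ccontr)
    assume "\<not> vc p C (b - z) < g"
    then have "g \<le> vc p C (b - z)" by simp
    then have "int p ^ g dvd (b - z)" using vc_ge[OF assms(2), of p "b - z"] by blast
    then have "b mod int p ^ g = z mod int p ^ g" by (simp add: mod_eq_dvd_iff)
    then show False using that by (simp add: b0_def)
  qed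
  have "(\<Sum>b\<in>?S. h (vc p C (b - z))) = h (vc p C (b0 - z)) + (\<Sum>b\<in>?S - {b0}. h (vc p C (b - z)))"
    using b0S by (simp add: sum.remove)
  also have "(\<Sum>b\<in>?S - {b0}. h (vc p C (b - z))) = (\<Sum>w\<in>{..<g}. of_nat (card {b\<in>?S - {b0}. vc p C (b - z) = w}) * h w)"
  proof (rule sum_group_card)
    show "(\<lambda>b. vc p C (b - z)) ` (?S - {b0}) \<subseteq> {..<g}"
    proof (rule image_subsetI)
      fix b assume "b \<in> ?S - {b0}"
      then show "vc p C (b - z) \<in> {..<g}" using small[of b] by blast
    qed
  qed auto
  also have "\<dots> = (\<Sum>w<g. (of_nat (p ^ (g - w)) - of_nat (p ^ (g - Suc w))) * h w)"
  proof (intro sum.cong refl)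
    fix w assume w: "w \<in> {..<g}"
    have "{b\<in>?S - {b0}. vc p C (b - z) = w} = {b\<in>?S. int p ^ w dvd (b - z)} - {b\<in>?S. int p ^ Suc w dvd (b - z)}"
    proof -
      have "vc p C (b - z) = w \<longleftrightarrow> int p ^ w dvd (b - z) \<and> \<not> int p ^ Suc w dvd (b - z)" for b
        using vc_ge[of w C p "b - z"] vc_ge[of "Suc w" C p "b - z"] w assms(2) by auto
      moreover have "vc p C (b0 - z) \<noteq> w"
      proof -
        have "int p ^ g dvd (b0 - z)" using mod_eq_dvd_iff[of "z mod int p ^ g" "int p ^ g" z] by (simp add: b0_def)
        then have "g \<le> vc p C (b0 - z)" using vc_ge[OF assms(2)] by simp
        then show ?thesis using w by auto
      qed
      ultimately show ?thesis by auto
    qed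
    moreover have "{b\<in>?S. int p ^ Suc w dvd (b - z)} \<subseteq> {b\<in>?S. int p ^ w dvd (b - z)}"
      by (auto intro: dvd_trans[OF le_imp_power_dvd[of w "Suc w"]])
    moreover have "finite {b\<in>?S. int p ^ Suc w dvd (b - z)}" by (rule finite_subset[of _ ?S]) auto
    ultimately have "card {b\<in>?S - {b0}. vc p C (b - z) = w} = p ^ (g - w) - p ^ (g - Suc w)"
      using card_dvd_shift[OF assms(1), of w g z] card_dvd_shift[OF assms(1), of "Suc w" g z] w
      by (simp only: card_Diff_subset) simp
    moreover have "p ^ (g - Suc w) \<le> p ^ (g - w)" using prime_ge_1_nat[OF assms(1)] by (intro power_increasing) auto
    ultimately show "of_nat (card {b\<in>?S - {b0}. vc p C (b - z) = w}) * h w = (of_nat (p ^ (g - w)) - of_nat (p ^ (g - Suc w))) * h w"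
      by (simp add: of_nat_diff)
  qed
  finally show ?thesis by (simp add: b0_def add.commute)
qed



lemma mod_bij:
  assumes "prime p" "\<not> int p dvd u"
  shows "bij_betw (\<lambda>y. (y * u + R) mod int p ^ g) {0..<int p ^ g} {0..<int p ^ g}"
proof -
  let ?S = "{0..<int p ^ g}"
  let ?h = "\<lambda>y. (y * u + R) mod int p ^ g"
  have pos: "0 < int p ^ g" using assms by (simp add: prime_gt_0_nat)
  have cop: "coprime (int p ^ g) u"
    using prime_imp_coprime[of "int p" u] assms by simp
  have inj: "inj_on ?h ?S"
  proof (rule inj_onI)
    fix a b assume a: "a \<in> ?S" and b: "b \<in> ?S" and e: "?h a = ?h b"
    then have "int p ^ g dvd (a * u + R) - (b * u + R)" by (simp add: mod_eq_dvd_iff)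
    then have "int p ^ g dvd (a - b) * u" by (simp add: algebra_simps)
    then have "int p ^ g dvd (a - b)" using cop by (simp add: coprime_dvd_mult_left_iff)
    then have "a mod int p ^ g = b mod int p ^ g" by (simp add: mod_eq_dvd_iff)
    then show "a = b" using a b by simp
  qed
  have "?h ` ?S \<subseteq> ?S" using pos by auto
  moreover have "card (?h ` ?S) = card ?S" using inj by (simp add: card_image)
  ultimately have "?h ` ?S = ?S" by (intro card_subset_eq) auto
  with inj show ?thesis by (rule bij_betw_imageI)
qed

lemma sum_shift_unit:
  assumes "prime p" "\<not> int p dvd u"
    and per: "\<And>y y'. int p ^ (\<mu> + g) dvd (y - y') \<Longrightarrow> \<Phi> y = \<Phi> y'"
  shows "(\<Sum>y\<in>{0..<int p ^ g}. \<Phi> (int p ^ \<mu> * (y * u + R))) = (\<Sum>w\<in>{0..<int p ^ g}. \<Phi> (int p ^ \<mu> * w))"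
proof -
  let ?h = "\<lambda>y. (y * u + R) mod int p ^ g"
  have "(\<Sum>y\<in>{0..<int p ^ g}. \<Phi> (int p ^ \<mu> * (y * u + R))) = (\<Sum>y\<in>{0..<int p ^ g}. \<Phi> (int p ^ \<mu> * ?h y))"
  proof (intro sum.cong refl per)
    fix y
    have d: "(y * u + R) - ?h y = int p ^ g * ((y * u + R) div int p ^ g)"
      by (metis minus_mod_eq_mult_div)
    have "int p ^ \<mu> * (y * u + R) - int p ^ \<mu> * ?h y = int p ^ \<mu> * ((y * u + R) - ?h y)"
      by (simp add: right_diff_distrib)
    also have "\<dots> = int p ^ (\<mu> + g) * ((y * u + R) div int p ^ g)"
      unfolding d by (simp add: power_add mult.assoc)
    finally have "int p ^ \<mu> * (y * u + R) - int p ^ \<mu> * ?h y = int p ^ (\<mu> + g) * ((y * u + R) div int p ^ g)" .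
    then show "int p ^ (\<mu> + g) dvd int p ^ \<mu> * (y * u + R) - int p ^ \<mu> * ?h y" by simp
  qed
  also have "\<dots> = (\<Sum>w\<in>{0..<int p ^ g}. \<Phi> (int p ^ \<mu> * w))"
    by (rule sum.reindex_bij_betw[OF mod_bij[OF assms(1,2)], of "\<lambda>w. \<Phi> (int p ^ \<mu> * w)"])
  finally show ?thesis .
qed

lemma sum_uniform:
  fixes \<Phi> :: "int \<Rightarrow> 'a::comm_semiring_1"
  assumes "prime p" "finite A" "s0 \<in> A" "bd r = int p ^ g"
    and xs0: "x s0 = int p ^ \<mu> * u" "\<not> int p dvd u"
    and xd: "\<And>s. s \<in> A \<Longrightarrow> int p ^ \<mu> dvd x s"
    and per: "\<And>y y'. int p ^ (\<mu> + g) dvd (y - y') \<Longrightarrow> \<Phi> y = \<Phi> y'"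
  shows "(\<Sum>f\<in>Fs ((\<lambda>s. (r, s)) ` A) bd. \<Phi> (\<Sum>s\<in>A. f r s * x s))
       = of_nat (card (Fs ((\<lambda>s. (r, s)) ` (A - {s0})) bd)) * (\<Sum>w\<in>{0..<int p ^ g}. \<Phi> (int p ^ \<mu> * w))"
proof -
  let ?J' = "(\<lambda>s. (r, s)) ` (A - {s0})"
  have J: "(\<lambda>s. (r, s)) ` A = {(r, s0)} \<union> ?J'" using assms(3) by auto
  have dj: "{(r, s0)} \<inter> ?J' = {}" by auto
  define R where "R f2 = (\<Sum>s\<in>A - {s0}. f2 r s * x s)" for f2
  have key: "(\<Sum>s\<in>A. padd (pt r s0 y) f2 r s * x s) = y * x s0 + R f2" if f2: "f2 \<in> Fs ?J' bd" for y f2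
  proof -
    have "f2 r s0 = 0" using Fs_zero[OF f2, of r s0] by auto
    then have "(\<Sum>s\<in>A. padd (pt r s0 y) f2 r s * x s) = y * x s0 + (\<Sum>s\<in>A - {s0}. padd (pt r s0 y) f2 r s * x s)"
      using assms(2,3) by (simp add: sum.remove padd_def pt_def)
    also have "(\<Sum>s\<in>A - {s0}. padd (pt r s0 y) f2 r s * x s) = R f2"
      unfolding R_def by (intro sum.cong refl) (auto simp: padd_def pt_def)
    finally show ?thesis .
  qed
  have Rd: "int p ^ \<mu> dvd R f2" for f2
    unfolding R_def by (intro dvd_sum) (use xd in auto)
  have "(\<Sum>f\<in>Fs ((\<lambda>s. (r, s)) ` A) bd. \<Phi> (\<Sum>s\<in>A. f r s * x s))
      = (\<Sum>f1\<in>Fs {(r, s0)} bd. \<Sum>f2\<in>Fs ?J' bd. \<Phi> (\<Sum>s\<in>A. padd f1 f2 r s * x s))"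
    unfolding J by (rule Fs_union_sum[OF dj])
  also have "\<dots> = (\<Sum>y\<in>{0..<bd r}. \<Sum>f2\<in>Fs ?J' bd. \<Phi> (\<Sum>s\<in>A. padd (pt r s0 y) f2 r s * x s))"
    by (rule Fs_single_sum)
  also have "\<dots> = (\<Sum>f2\<in>Fs ?J' bd. \<Sum>y\<in>{0..<int p ^ g}. \<Phi> (y * x s0 + R f2))"
    unfolding assms(4) by (subst sum.swap) (intro sum.cong refl, simp add: key)
  also have "\<dots> = (\<Sum>f2\<in>Fs ?J' bd. \<Sum>w\<in>{0..<int p ^ g}. \<Phi> (int p ^ \<mu> * w))"
  proof (rule sum.cong[OF refl])
    fix f2
    obtain R' where R': "R f2 = int p ^ \<mu> * R'" using Rd by (metis dvdE)
    have "(\<Sum>y\<in>{0..<int p ^ g}. \<Phi> (y * x s0 + R f2)) = (\<Sum>y\<in>{0..<int p ^ g}. \<Phi> (int p ^ \<mu> * (y * u + R')))"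
      by (intro sum.cong refl) (simp add: xs0(1) R' algebra_simps)
    also have "\<dots> = (\<Sum>w\<in>{0..<int p ^ g}. \<Phi> (int p ^ \<mu> * w))"
      by (rule sum_shift_unit[OF assms(1) xs0(2) per])
    finally show "(\<Sum>y\<in>{0..<int p ^ g}. \<Phi> (y * x s0 + R f2)) = (\<Sum>w\<in>{0..<int p ^ g}. \<Phi> (int p ^ \<mu> * w))" .
  qed
  also have "\<dots> = of_nat (card (Fs ?J' bd)) * (\<Sum>w\<in>{0..<int p ^ g}. \<Phi> (int p ^ \<mu> * w))"
    by simp
  finally show ?thesis .
qed



definition bdv :: "nat \<Rightarrow> (nat \<Rightarrow> nat) \<Rightarrow> nat \<Rightarrow> int" where
  "bdv p e r = int p ^ (e r - 1)"

definition Mc :: "(nat \<Rightarrow> nat) \<Rightarrow> nat \<Rightarrow> nat" where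
  "Mc e r = (\<Sum>t\<in>{1..r}. e t)"

lemma Mc_step: "1 \<le> r \<Longrightarrow> Mc e r = Mc e (r - 1) + e r"
proof -
  assume "1 \<le> r"
  then have "{1..r} = insert r {1..r - 1}" by auto
  moreover have "r \<notin> {1..r - 1}" by auto
  ultimately show ?thesis unfolding Mc_def by (simp add: add.commute)
qed

lemma Mc_mono: "r \<le> r' \<Longrightarrow> Mc e r \<le> Mc e r'"
  unfolding Mc_def by (rule sum_mono2) auto

lemma e_le_Mc: "1 \<le> r \<Longrightarrow> e r \<le> Mc e r"
  using Mc_step[of r e] by simp

definition st :: "nat \<Rightarrow> nat \<Rightarrow> (nat \<Rightarrow> nat) \<Rightarrow> nat \<Rightarrow> (nat \<Rightarrow> int) \<Rightarrow> nat" where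
  "st p i e r x = Min (insert (Mc e r) ((\<lambda>s. vc p (Mc e r) (x s)) ` {r<..<i}))"

lemma st_ge: "m \<le> st p i e r x \<longleftrightarrow> m \<le> Mc e r \<and> (\<forall>s\<in>{r<..<i}. int p ^ m dvd x s)"
proof -
  have "m \<le> st p i e r x \<longleftrightarrow> m \<le> Mc e r \<and> (\<forall>s\<in>{r<..<i}. m \<le> vc p (Mc e r) (x s))"
    unfolding st_def by (subst Min_ge_iff) auto
  also have "\<dots> \<longleftrightarrow> m \<le> Mc e r \<and> (\<forall>s\<in>{r<..<i}. int p ^ m dvd x s)"
    using vc_ge by blast
  finally show ?thesis .
qed

lemma st_le: "st p i e r x \<le> Mc e r"
  using st_ge[of "st p i e r x" p i e r x] by simp

lemma nat_eq_by_le: "(\<And>m::nat. m \<le> a \<longleftrightarrow> m \<le> b) \<Longrightarrow> a = b"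
  by (metis le_antisym order_refl)

lemma st_new:
  assumes "prime p" "1 \<le> r" "r < i" "int p ^ e r dvd T"
  shows "st p i e (r - 1) (x(r := T div int p ^ e r))
       = min (Mc e (r - 1)) (min (st p i e r x) (vc p (Mc e r) T - e r))"
proof (rule nat_eq_by_le)
  fix m
  let ?M' = "Mc e (r - 1)" and ?L = "Mc e r" and ?E = "e r"
  have L: "?L = ?M' + ?E" using Mc_step[OF assms(2)] by simp
  obtain q where T: "T = int p ^ ?E * q" using assms(4) by (metis dvdE)
  have pos: "int p ^ ?E \<noteq> 0" using assms(1) by (simp add: prime_gt_0_nat)
  have Eval: "?E \<le> vc p ?L T" using vc_ge[of ?E ?L p T] assms(4) L by simp
  have set: "{r - 1<..<i} = insert r {r<..<i}" using assms(2,3) by auto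
  have "m \<le> st p i e (r - 1) (x(r := T div int p ^ e r))
      \<longleftrightarrow> m \<le> ?M' \<and> int p ^ m dvd q \<and> (\<forall>s\<in>{r<..<i}. int p ^ m dvd x s)"
    unfolding st_ge set using T pos by auto
  also have "\<dots> \<longleftrightarrow> m \<le> ?M' \<and> (m \<le> ?L \<and> (\<forall>s\<in>{r<..<i}. int p ^ m dvd x s)) \<and> m + ?E \<le> vc p ?L T"
  proof -
    have "m \<le> ?M' \<Longrightarrow> (m + ?E \<le> vc p ?L T \<longleftrightarrow> int p ^ (m + ?E) dvd T)"
      using vc_ge[of "m + ?E" ?L p T] L by simp
    moreover have "int p ^ (m + ?E) dvd T \<longleftrightarrow> int p ^ m dvd q"
      unfolding T using pos assms(1) by (simp add: power_add mult.commute prime_gt_0_nat)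
    ultimately show ?thesis using L by auto
  qed
  also have "\<dots> \<longleftrightarrow> m \<le> min ?M' (min (st p i e r x) (vc p ?L T - ?E))"
    using Eval st_ge[of m p i e r x] by auto
  finally show "m \<le> st p i e (r - 1) (x(r := T div int p ^ e r)) \<longleftrightarrow> m \<le> min ?M' (min (st p i e r x) (vc p ?L T - ?E))" .
qed



definition Oc :: "nat \<Rightarrow> nat \<Rightarrow> nat \<Rightarrow> nat \<Rightarrow> nat \<Rightarrow> bool" where
  "Oc E M' \<mu> s' l \<longleftrightarrow> E \<le> l \<and> min M' (min \<mu> (l - E)) = s'"

definition Dw :: "nat \<Rightarrow> nat \<Rightarrow> (nat \<Rightarrow> rat) \<Rightarrow> rat" where
  "Dw p g h = (\<Sum>w<g. (of_nat (p ^ (g - w)) - of_nat (p ^ (g - Suc w))) * h w)"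

definition S2 :: "nat \<Rightarrow> nat \<Rightarrow> nat \<Rightarrow> nat \<Rightarrow> (nat \<Rightarrow> nat \<Rightarrow> rat) \<Rightarrow> rat" where
  "S2 p g C \<nu> h = Dw p g (\<lambda>u. Dw p g (\<lambda>w. h u w) + h u \<nu>) + (Dw p g (\<lambda>w. h C w) + h C \<nu>)"

definition K1 :: "nat \<Rightarrow> nat \<Rightarrow> nat \<Rightarrow> nat \<Rightarrow> (nat \<Rightarrow> bool) \<Rightarrow> rat" where
  "K1 p g L \<mu> Ob = Dw p g (\<lambda>u. of_bool (Ob (min L (\<mu> + 1 + u)))) + of_bool (Ob (min L (\<mu> + 1 + g)))"

lemma Oc_min: "Oc E M' \<mu> s' l = Oc E M' \<mu> s' (min l (\<mu> + E))"
  unfolding Oc_def by (cases "l \<le> \<mu> + E") (auto simp: min_def)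

lemma Oc_per:
  assumes "int p ^ (\<mu> + E) dvd z - z'"
  shows "Oc E M' \<mu> s' (vc p L z) = Oc E M' \<mu> s' (vc p L z')"
proof -
  let ?K = "min L (\<mu> + E)"
  have a: "min (vc p L w) (\<mu> + E) = vc p ?K w" for w
    using vc_min[of ?K L p w] vc_le[of p L w] by (simp add: min_def)
  have "int p ^ ?K dvd int p ^ (\<mu> + E)" by (rule le_imp_power_dvd) simp
  then have "vc p ?K z = vc p ?K z'" using assms by (intro vc_mod) (rule dvd_trans)
  then show ?thesis using Oc_min[of E M' \<mu> s' "vc p L z"] Oc_min[of E M' \<mu> s' "vc p L z'"] a by simp
qed

lemma sum_vc_zero:
  fixes h :: "nat \<Rightarrow> rat"
  assumes "prime p" "g \<le> C"
  shows "(\<Sum>c\<in>{0..<int p ^ g}. h (vc p C c)) = Dw p g h + h C"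
  using sum_vc_shift[OF assms, of h 0] by (simp add: Dw_def vc_zero)

lemma sum_cb:
  fixes h :: "nat \<Rightarrow> nat \<Rightarrow> rat"
  assumes "prime p" "g \<le> C"
  shows "(\<Sum>c\<in>{0..<int p ^ g}. \<Sum>b\<in>{0..<int p ^ g}. h (vc p C c) (vc p C (b - \<beta>)))
       = S2 p g C (vc p C (\<beta> mod int p ^ g - \<beta>)) h"
proof -
  have "(\<Sum>c\<in>{0..<int p ^ g}. \<Sum>b\<in>{0..<int p ^ g}. h (vc p C c) (vc p C (b - \<beta>)))
      = (\<Sum>c\<in>{0..<int p ^ g}. Dw p g (\<lambda>w. h (vc p C c) w) + h (vc p C c) (vc p C (\<beta> mod int p ^ g - \<beta>)))"
    by (intro sum.cong refl) (simp add: sum_vc_shift[OF assms] Dw_def)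
  also have "\<dots> = S2 p g C (vc p C (\<beta> mod int p ^ g - \<beta>)) h"
    unfolding S2_def by (rule sum_vc_zero[OF assms])
  finally show ?thesis .
qed

lemma stepD:
  assumes "prime p" "\<mu> < L" "L = M' + E" "1 \<le> E" "g = E - 1"
  shows "(\<Sum>w\<in>{0..<int p ^ g}. of_bool (Oc E M' \<mu> s' (vc p L (y - int p ^ (\<mu> + 1) * w))) :: rat)
       = (if vc p (\<mu> + 1) y \<le> \<mu> then of_nat p ^ g * of_bool (Oc E M' \<mu> s' (vc p (\<mu> + 1) y))
          else K1 p g L \<mu> (Oc E M' \<mu> s'))"
proof (cases "vc p (\<mu> + 1) y \<le> \<mu>")
  case True
  have eq: "vc p L (y - int p ^ (\<mu> + 1) * w) = vc p (\<mu> + 1) y" for w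
  proof -
    have "vc p (\<mu> + 1) (y - int p ^ (\<mu> + 1) * w) = vc p (\<mu> + 1) y" by (rule vc_mod) simp
    moreover have "vc p (\<mu> + 1) (y - int p ^ (\<mu> + 1) * w) = min (\<mu> + 1) (vc p L (y - int p ^ (\<mu> + 1) * w))"
      using assms(2) by (intro vc_min) simp
    ultimately show ?thesis using True by (simp add: min_def split: if_splits)
  qed
  have c: "card {0..<int p ^ g} = p ^ g" by (simp add: nat_power_eq)
  have "(\<Sum>w\<in>{0..<int p ^ g}. of_bool (Oc E M' \<mu> s' (vc p L (y - int p ^ (\<mu> + 1) * w))) :: rat)
      = (\<Sum>w\<in>{0..<int p ^ g}. of_bool (Oc E M' \<mu> s' (vc p (\<mu> + 1) y)))"
    by (intro sum.cong refl) (simp only: eq)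
  also have "\<dots> = of_nat p ^ g * of_bool (Oc E M' \<mu> s' (vc p (\<mu> + 1) y))"
    by (simp only: sum_constant c) simp
  finally show ?thesis using True by simp
next
  case False
  then have "\<mu> + 1 \<le> vc p (\<mu> + 1) y" by simp
  then have "int p ^ (\<mu> + 1) dvd y" using vc_ge[of "\<mu> + 1" "\<mu> + 1" p y] by simp
  then obtain y' where y: "y = int p ^ (\<mu> + 1) * y'" by (metis dvdE)
  have gL: "g \<le> L" using assms by simp
  have v1: "vc p L 1 = 0" by (rule vc_eqI) (use assms(1) in \<open>auto simp: prime_gt_1_nat\<close>)
  have tm: "Oc E M' \<mu> s' (vc p L (y - int p ^ (\<mu> + 1) * w)) = Oc E M' \<mu> s' (min L (\<mu> + 1 + vc p g (w - y')))" for w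
  proof -
    have "vc p L (y - int p ^ (\<mu> + 1) * w) = vc p L (int p ^ (\<mu> + 1) * (y' - w) * 1)"
      by (simp add: y algebra_simps)
    also have "\<dots> = min L (\<mu> + 1 + vc p L (y' - w))"
      using vc_mult[OF assms(1) order_refl[of L], where a="\<mu> + 1" and c="y' - w" and d=1] v1 by simp
    finally have a: "vc p L (y - int p ^ (\<mu> + 1) * w) = min L (\<mu> + 1 + vc p L (y' - w))" .
    have b: "vc p g (w - y') = min g (vc p L (y' - w))"
      using vc_min[OF gL, of p "y' - w"] vc_uminus[of p g "y' - w"] by simp
    have "Oc E M' \<mu> s' (min L (\<mu> + 1 + vc p L (y' - w))) = Oc E M' \<mu> s' (min (min L (\<mu> + 1 + vc p L (y' - w))) (\<mu> + E))"
      by (rule Oc_min)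
    also have "min (min L (\<mu> + 1 + vc p L (y' - w))) (\<mu> + E) = min (min L (\<mu> + 1 + vc p g (w - y'))) (\<mu> + E)"
      unfolding b using assms(4,5) by (simp add: min_def split: if_split) arith
    also have "Oc E M' \<mu> s' \<dots> = Oc E M' \<mu> s' (min L (\<mu> + 1 + vc p g (w - y')))"
      by (rule Oc_min[symmetric])
    finally show ?thesis using a by simp
  qed
  have "(\<Sum>w\<in>{0..<int p ^ g}. of_bool (Oc E M' \<mu> s' (vc p L (y - int p ^ (\<mu> + 1) * w))) :: rat)
      = (\<Sum>w\<in>{0..<int p ^ g}. (\<lambda>u. of_bool (Oc E M' \<mu> s' (min L (\<mu> + 1 + u)))) (vc p g (w - y')))"
    by (intro sum.cong refl) (simp only: tm)
  also have "\<dots> = Dw p g (\<lambda>u. of_bool (Oc E M' \<mu> s' (min L (\<mu> + 1 + u))))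
                 + of_bool (Oc E M' \<mu> s' (min L (\<mu> + 1 + vc p g (y' mod int p ^ g - y'))))"
    unfolding Dw_def by (rule sum_vc_shift[OF assms(1) order_refl])
  also have "vc p g (y' mod int p ^ g - y') = g"
  proof -
    have "int p ^ g dvd (y' mod int p ^ g - y')"
      using mod_eq_dvd_iff[of "y' mod int p ^ g" "int p ^ g" y'] by simp
    then show ?thesis using vc_ge[of g g p] vc_le[of p g] by (metis le_antisym order_refl)
  qed
  finally show ?thesis using False unfolding K1_def by simp
qed



definition RowS :: "nat \<Rightarrow> nat \<Rightarrow> nat \<Rightarrow> (nat \<times> nat) set" where
  "RowS i j r = (\<lambda>s. (r, s)) ` {r<..<i} \<union> ({(r, i)} \<union> {(r, j)})"

definition Tv :: "nat \<Rightarrow> nat \<Rightarrow> nat \<Rightarrow> (nat \<Rightarrow> nat \<Rightarrow> int) \<Rightarrow> (nat \<Rightarrow> int) \<Rightarrow> int \<Rightarrow> nat \<Rightarrow> int" where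
  "Tv p i j a x \<beta> r = int p ^ 2 * a r i * (a r j - \<beta>) - (\<Sum>s\<in>{r<..<i}. int p * a r s * x s)"

definition Gr :: "nat \<Rightarrow> nat \<Rightarrow> (nat \<Rightarrow> nat) \<Rightarrow> nat \<Rightarrow> nat \<Rightarrow> nat \<Rightarrow> nat \<Rightarrow> rat" where
  "Gr p i e r \<mu> \<nu> s' =
    (if \<mu> = Mc e r then of_nat p ^ ((e r - 1) * (i - Suc r)) *
        S2 p (e r - 1) (Mc e i + 1) \<nu> (\<lambda>u w. of_bool (Oc (e r) (Mc e (r - 1)) \<mu> s' (min (Mc e r) (2 + u + w))))
     else of_nat p ^ ((e r - 1) * (i - Suc r - 1)) *
        S2 p (e r - 1) (Mc e i + 1) \<nu> (\<lambda>u w. if min (\<mu> + 1) (2 + u + w) \<le> \<mu>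
            then of_nat p ^ (e r - 1) * of_bool (Oc (e r) (Mc e (r - 1)) \<mu> s' (min (\<mu> + 1) (2 + u + w)))
            else K1 p (e r - 1) (Mc e r) \<mu> (Oc (e r) (Mc e (r - 1)) \<mu> s')))"

lemma card_filter_sum:
  assumes "finite S"
  shows "(of_nat (card {x\<in>S. Q x}) :: rat) = (\<Sum>x\<in>S. of_bool (Q x))"
proof -
  have "(\<Sum>x\<in>S. of_bool (Q x) :: rat) = (\<Sum>x\<in>{x\<in>S. Q x}. 1)"
    using sum.inter_filter[OF assms, of "\<lambda>_. 1::rat" Q] by (simp add: of_bool_def)
  then show ?thesis by simp
qed

lemma Tv_split:
  assumes "\<alpha> \<in> Fs ((\<lambda>s. (r, s)) ` {r<..<i}) bd" "i < j"
  shows "Tv p i j (padd \<alpha> (padd (pt r i c) (pt r j b))) x \<beta> r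
       = int p ^ 2 * c * (b - \<beta>) - int p * (\<Sum>s\<in>{r<..<i}. \<alpha> r s * x s)"
proof -
  have "(r, i) \<notin> (\<lambda>s. (r, s)) ` {r<..<i}" by auto
  then have ai: "\<alpha> r i = 0" by (rule Fs_zero[OF assms(1)])
  have "(r, j) \<notin> (\<lambda>s. (r, s)) ` {r<..<i}" using assms(2) by auto
  then have aj: "\<alpha> r j = 0" by (rule Fs_zero[OF assms(1)])
  have "(\<Sum>s\<in>{r<..<i}. int p * padd \<alpha> (padd (pt r i c) (pt r j b)) r s * x s) = (\<Sum>s\<in>{r<..<i}. int p * (\<alpha> r s * x s))"
    using assms(2) by (intro sum.cong refl) (auto simp: padd_def pt_def)
  also have "\<dots> = int p * (\<Sum>s\<in>{r<..<i}. \<alpha> r s * x s)" by (simp add: sum_distrib_left)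
  finally show ?thesis using ai aj assms(2) unfolding Tv_def by (simp add: padd_def pt_def)
qed

lemma Fs_row_sum:
  assumes "r < i" "i < j"
  shows "(\<Sum>f\<in>Fs (RowS i j r) bd. \<Psi> f)
       = (\<Sum>c\<in>{0..<bd r}. \<Sum>b\<in>{0..<bd r}. \<Sum>\<alpha>\<in>Fs ((\<lambda>s. (r, s)) ` {r<..<i}) bd. \<Psi> (padd \<alpha> (padd (pt r i c) (pt r j b))))"
proof -
  let ?JA = "(\<lambda>s. (r, s)) ` {r<..<i}"
  have d1: "?JA \<inter> ({(r, i)} \<union> {(r, j)}) = {}" using assms by auto
  have d2: "{(r, i)} \<inter> {(r, j)} = {}" using assms by auto
  have "(\<Sum>f\<in>Fs (RowS i j r) bd. \<Psi> f) = (\<Sum>\<alpha>\<in>Fs ?JA bd. \<Sum>f'\<in>Fs ({(r, i)} \<union> {(r, j)}) bd. \<Psi> (padd \<alpha> f'))"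
    unfolding RowS_def by (rule Fs_union_sum[OF d1])
  also have "\<dots> = (\<Sum>\<alpha>\<in>Fs ?JA bd. \<Sum>f1\<in>Fs {(r, i)} bd. \<Sum>f2\<in>Fs {(r, j)} bd. \<Psi> (padd \<alpha> (padd f1 f2)))"
    by (intro sum.cong refl Fs_union_sum[OF d2])
  also have "\<dots> = (\<Sum>\<alpha>\<in>Fs ?JA bd. \<Sum>c\<in>{0..<bd r}. \<Sum>b\<in>{0..<bd r}. \<Psi> (padd \<alpha> (padd (pt r i c) (pt r j b))))"
    by (intro sum.cong refl) (simp add: Fs_single_sum)
  also have "\<dots> = (\<Sum>c\<in>{0..<bd r}. \<Sum>\<alpha>\<in>Fs ?JA bd. \<Sum>b\<in>{0..<bd r}. \<Psi> (padd \<alpha> (padd (pt r i c) (pt r j b))))"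
    by (rule sum.swap)
  also have "\<dots> = (\<Sum>c\<in>{0..<bd r}. \<Sum>b\<in>{0..<bd r}. \<Sum>\<alpha>\<in>Fs ?JA bd. \<Psi> (padd \<alpha> (padd (pt r i c) (pt r j b))))"
    by (intro sum.cong refl sum.swap)
  finally show ?thesis .
qed



lemma row_count:
  assumes p: "prime p" and r: "1 \<le> r" "r < i" and ij: "i < j" and er: "0 < e r"
  shows "(of_nat (card {f \<in> Fs (RowS i j r) (bdv p e). int p ^ e r dvd Tv p i j f x \<beta> r \<and>
             st p i e (r - 1) (x(r := Tv p i j f x \<beta> r div int p ^ e r)) = s'}) :: rat)
         = Gr p i e r (st p i e r x) (vc p (Mc e i + 1) (\<beta> mod int p ^ (e r - 1) - \<beta>)) s'"
proof -
  define E where "E = e r"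
  define g where "g = e r - 1"
  define M' where "M' = Mc e (r - 1)"
  define L where "L = Mc e r"
  define C where "C = Mc e i + 1"
  define \<mu> where "\<mu> = st p i e r x"
  define A where "A = {r<..<i}"
  define m where "m = i - Suc r"
  define bd where "bd = bdv p e"
  define Ob where "Ob = Oc E M' \<mu> s'"
  have LE: "L = M' + E" unfolding L_def M'_def E_def using Mc_step[OF r(1)] by simp
  have E1: "1 \<le> E" using er E_def by simp
  have gE: "g = E - 1" using g_def E_def by simp
  have EL: "E \<le> L" using LE by simp
  have LC: "L \<le> C" unfolding L_def C_def using Mc_mono[of r i e] r by simp
  have gC: "g \<le> C" using gE EL LC by simp
  have muL: "\<mu> \<le> L" unfolding \<mu>_def L_def by (rule st_le)
  have bdr: "bd r = int p ^ g" unfolding bd_def bdv_def g_def by simp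
  have cardA: "card A = m" unfolding A_def m_def by simp
  have pp: "0 < p" using p by (simp add: prime_gt_0_nat)
  have cond: "(int p ^ E dvd T \<and> st p i e (r - 1) (x(r := T div int p ^ E)) = s') \<longleftrightarrow> Ob (vc p L T)" for T
  proof
    assume h: "int p ^ E dvd T \<and> st p i e (r - 1) (x(r := T div int p ^ E)) = s'"
    then have "E \<le> vc p L T" using vc_ge[OF EL] by blast
    moreover have "st p i e (r - 1) (x(r := T div int p ^ E)) = min M' (min \<mu> (vc p L T - E))"
      using st_new[OF p r, of e T x] h unfolding E_def M'_def \<mu>_def L_def by simp
    ultimately show "Ob (vc p L T)" using h unfolding Ob_def Oc_def by simp
  next
    assume h: "Ob (vc p L T)"
    then have "E \<le> vc p L T" unfolding Ob_def Oc_def by simp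
    then have d: "int p ^ E dvd T" using vc_ge[OF EL] by blast
    then have "st p i e (r - 1) (x(r := T div int p ^ E)) = min M' (min \<mu> (vc p L T - E))"
      using st_new[OF p r, of e T x] unfolding E_def M'_def \<mu>_def L_def by simp
    then show "int p ^ E dvd T \<and> st p i e (r - 1) (x(r := T div int p ^ E)) = s'"
      using d h unfolding Ob_def Oc_def by simp
  qed
  have finR: "finite (Fs (RowS i j r) bd)" unfolding RowS_def by (intro Fs_finite) simp
  have "(of_nat (card {f \<in> Fs (RowS i j r) (bdv p e). int p ^ e r dvd Tv p i j f x \<beta> r \<and>
             st p i e (r - 1) (x(r := Tv p i j f x \<beta> r div int p ^ e r)) = s'}) :: rat)
      = (\<Sum>f\<in>Fs (RowS i j r) bd. of_bool (Ob (vc p L (Tv p i j f x \<beta> r))))"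
    unfolding bd_def[symmetric] E_def[symmetric] cond by (rule card_filter_sum[OF finR])
  also have "\<dots> = (\<Sum>c\<in>{0..<int p ^ g}. \<Sum>b\<in>{0..<int p ^ g}. \<Sum>\<alpha>\<in>Fs ((\<lambda>s. (r, s)) ` A) bd.
        of_bool (Ob (vc p L (int p ^ 2 * c * (b - \<beta>) - int p * (\<Sum>s\<in>A. \<alpha> r s * x s)))))"
    unfolding Fs_row_sum[OF r(2) ij] bdr[symmetric] A_def
    by (intro sum.cong refl) (simp add: Tv_split[OF _ ij])
  also have "\<dots> = Gr p i e r \<mu> (vc p C (\<beta> mod int p ^ g - \<beta>)) s'"
  proof (cases "\<mu> = L")
    case True
    have xd: "int p ^ L dvd x s" if "s \<in> A" for s
      using st_ge[of L p i e r x] True that unfolding \<mu>_def A_def L_def by simp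
    have cardF: "card (Fs ((\<lambda>s. (r, s)) ` A) bd) = p ^ (g * m)"
    proof -
      have "int (card (Fs ((\<lambda>s. (r, s)) ` A) bd)) = bd r ^ card ((\<lambda>s. (r, s)) ` A)"
        by (rule Fs_card_row) (auto simp: A_def bdr)
      also have "card ((\<lambda>s. (r, s)) ` A) = m" using cardA by (simp add: card_image inj_on_def)
      finally show ?thesis unfolding bdr by (simp add: power_mult[symmetric] of_nat_eq_iff[symmetric])
    qed
    have inner: "(\<Sum>\<alpha>\<in>Fs ((\<lambda>s. (r, s)) ` A) bd. of_bool (Ob (vc p L (int p ^ 2 * c * (b - \<beta>) - int p * (\<Sum>s\<in>A. \<alpha> r s * x s))))) 
        = (of_nat p ^ (g * m) :: rat) * of_bool (Ob (min L (2 + vc p C c + vc p C (b - \<beta>))))" for c b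
    proof -
      have "vc p L (int p ^ 2 * c * (b - \<beta>) - int p * (\<Sum>s\<in>A. \<alpha> r s * x s)) = vc p L (int p ^ 2 * c * (b - \<beta>))" for \<alpha>
      proof (rule vc_mod)
        have "int p ^ L dvd (\<Sum>s\<in>A. \<alpha> r s * x s)" by (intro dvd_sum) (simp add: xd)
        then show "int p ^ L dvd int p ^ 2 * c * (b - \<beta>) - int p * (\<Sum>s\<in>A. \<alpha> r s * x s) - int p ^ 2 * c * (b - \<beta>)"
          by simp
      qed
      moreover have "vc p L (int p ^ 2 * c * (b - \<beta>)) = min L (2 + vc p C c + vc p C (b - \<beta>))"
        by (rule vc_mult[OF p LC])
      ultimately show ?thesis using cardF by simp
    qed
    have "(\<Sum>c\<in>{0..<int p ^ g}. \<Sum>b\<in>{0..<int p ^ g}. \<Sum>\<alpha>\<in>Fs ((\<lambda>s. (r, s)) ` A) bd.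
        of_bool (Ob (vc p L (int p ^ 2 * c * (b - \<beta>) - int p * (\<Sum>s\<in>A. \<alpha> r s * x s)))))
      = (\<Sum>c\<in>{0..<int p ^ g}. \<Sum>b\<in>{0..<int p ^ g}. 
          (of_nat p ^ (g * m) :: rat) * (\<lambda>u w. of_bool (Ob (min L (2 + u + w)))) (vc p C c) (vc p C (b - \<beta>)))"
      by (rule sum.cong[OF refl], rule sum.cong[OF refl], simp only: inner)
    also have "\<dots> = (of_nat p ^ (g * m) :: rat) * (\<Sum>c\<in>{0..<int p ^ g}. \<Sum>b\<in>{0..<int p ^ g}. 
          (\<lambda>u w. of_bool (Ob (min L (2 + u + w)))) (vc p C c) (vc p C (b - \<beta>)))"
      by (simp only: sum_distrib_left)
    also have "\<dots> = of_nat p ^ (g * m) * S2 p g C (vc p C (\<beta> mod int p ^ g - \<beta>)) (\<lambda>u w. of_bool (Ob (min L (2 + u + w))))"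
      by (subst sum_cb[OF p gC, symmetric]) simp
    also have "\<dots> = Gr p i e r \<mu> (vc p C (\<beta> mod int p ^ g - \<beta>)) s'"
      using True unfolding Gr_def Ob_def E_def g_def M'_def L_def C_def m_def by simp
    finally show ?thesis .
  next
    case False
    then have muL': "\<mu> < L" using muL by simp
    have xd: "int p ^ \<mu> dvd x s" if "s \<in> A" for s
      using st_ge[of \<mu> p i e r x] that unfolding \<mu>_def A_def by simp
    obtain s0 where s0: "s0 \<in> A" "\<not> int p ^ (\<mu> + 1) dvd x s0"
      using st_ge[of "\<mu> + 1" p i e r x] muL' unfolding \<mu>_def A_def L_def by auto
    obtain u where u: "x s0 = int p ^ \<mu> * u" using xd[OF s0(1)] by (metis dvdE)
    have nu: "\<not> int p dvd u" using s0(2) u by (auto simp: mult_dvd_mono)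
    have cardF: "card (Fs ((\<lambda>s. (r, s)) ` (A - {s0})) bd) = p ^ (g * (m - 1))"
    proof -
      have "int (card (Fs ((\<lambda>s. (r, s)) ` (A - {s0})) bd)) = bd r ^ card ((\<lambda>s. (r, s)) ` (A - {s0}))"
        by (rule Fs_card_row) (auto simp: A_def bdr)
      also have "card ((\<lambda>s. (r, s)) ` (A - {s0})) = m - 1" using cardA s0(1) A_def by (simp add: card_image inj_on_def)
      finally show ?thesis unfolding bdr by (simp add: power_mult[symmetric] of_nat_eq_iff[symmetric])
    qed
    define H where "H l = (if l \<le> \<mu> then of_nat p ^ g * of_bool (Ob l) else K1 p g L \<mu> Ob)" for l
    have inner: "(\<Sum>\<alpha>\<in>Fs ((\<lambda>s. (r, s)) ` A) bd. of_bool (Ob (vc p L (int p ^ 2 * c * (b - \<beta>) - int p * (\<Sum>s\<in>A. \<alpha> r s * x s))))) 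
        = (of_nat p ^ (g * (m - 1)) :: rat) * H (min (\<mu> + 1) (2 + vc p C c + vc p C (b - \<beta>)))" for c b
    proof -
      define y where "y = int p ^ 2 * c * (b - \<beta>)"
      have per: "(of_bool (Ob (vc p L (y - int p * t))) :: rat) = of_bool (Ob (vc p L (y - int p * t')))"
        if "int p ^ (\<mu> + g) dvd (t - t')" for t t'
      proof -
        have "int p ^ (\<mu> + E) dvd int p * (t' - t)"
        proof -
          have e: "\<mu> + E = Suc (\<mu> + g)" using gE E1 by simp
          have "int p ^ (\<mu> + g) dvd (t' - t)" using that by (metis dvd_minus_iff minus_diff_eq)
          then have "int p * int p ^ (\<mu> + g) dvd int p * (t' - t)" by (rule mult_dvd_mono[OF dvd_refl])
          then show ?thesis unfolding e by simp
        qed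
        then have "int p ^ (\<mu> + E) dvd (y - int p * t) - (y - int p * t')" by (simp add: algebra_simps)
        then have "Ob (vc p L (y - int p * t)) = Ob (vc p L (y - int p * t'))" unfolding Ob_def by (rule Oc_per)
        then show ?thesis by simp
      qed
      have "(\<Sum>\<alpha>\<in>Fs ((\<lambda>s. (r, s)) ` A) bd. (\<lambda>t. of_bool (Ob (vc p L (y - int p * t))) :: rat) (\<Sum>s\<in>A. \<alpha> r s * x s))
          = of_nat (card (Fs ((\<lambda>s. (r, s)) ` (A - {s0})) bd)) * (\<Sum>w\<in>{0..<int p ^ g}. of_bool (Ob (vc p L (y - int p * (int p ^ \<mu> * w)))))"
        by (rule sum_uniform[where bd=bd and r=r and x=x and A=A and g=g and \<mu>=\<mu> and u=u and \<Phi>="\<lambda>t. of_bool (Ob (vc p L (y - int p * t)))", OF p _ s0(1) bdr u nu xd per]) (simp add: A_def)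
      also have "(\<Sum>w\<in>{0..<int p ^ g}. of_bool (Ob (vc p L (y - int p * (int p ^ \<mu> * w)))) :: rat)
          = (\<Sum>w\<in>{0..<int p ^ g}. of_bool (Ob (vc p L (y - int p ^ (\<mu> + 1) * w))))"
        by (intro sum.cong refl) (simp add: mult.assoc)
      also have "\<dots> = H (vc p (\<mu> + 1) y)"
        unfolding H_def Ob_def by (rule stepD[OF p muL' LE E1 gE])
      also have "vc p (\<mu> + 1) y = min (\<mu> + 1) (2 + vc p C c + vc p C (b - \<beta>))"
        unfolding y_def using muL' LC by (intro vc_mult[OF p]) simp
      finally show ?thesis using cardF unfolding y_def by simp
    qed
    have "(\<Sum>c\<in>{0..<int p ^ g}. \<Sum>b\<in>{0..<int p ^ g}. \<Sum>\<alpha>\<in>Fs ((\<lambda>s. (r, s)) ` A) bd.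
        of_bool (Ob (vc p L (int p ^ 2 * c * (b - \<beta>) - int p * (\<Sum>s\<in>A. \<alpha> r s * x s)))))
      = (\<Sum>c\<in>{0..<int p ^ g}. \<Sum>b\<in>{0..<int p ^ g}. 
          (of_nat p ^ (g * (m - 1)) :: rat) * (\<lambda>u w. H (min (\<mu> + 1) (2 + u + w))) (vc p C c) (vc p C (b - \<beta>)))"
      by (rule sum.cong[OF refl], rule sum.cong[OF refl], simp only: inner)
    also have "\<dots> = (of_nat p ^ (g * (m - 1)) :: rat) * (\<Sum>c\<in>{0..<int p ^ g}. \<Sum>b\<in>{0..<int p ^ g}. 
          (\<lambda>u w. H (min (\<mu> + 1) (2 + u + w))) (vc p C c) (vc p C (b - \<beta>)))"
      by (simp only: sum_distrib_left)
    also have "\<dots> = of_nat p ^ (g * (m - 1)) * S2 p g C (vc p C (\<beta> mod int p ^ g - \<beta>)) (\<lambda>u w. H (min (\<mu> + 1) (2 + u + w)))"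
      by (subst sum_cb[OF p gC, symmetric]) simp
    also have "\<dots> = Gr p i e r \<mu> (vc p C (\<beta> mod int p ^ g - \<beta>)) s'"
      using False unfolding Gr_def Ob_def E_def g_def M'_def L_def C_def m_def H_def by simp
    finally show ?thesis .
  qed
  finally show ?thesis unfolding \<mu>_def C_def g_def .
qed



lemma PF_ofnat_pow: "PF (\<lambda>p. of_nat (p ^ k))"
  using PF_power[OF PF_id, of k] by simp

lemma PF_Dw: "(\<And>w. PF (\<lambda>p. h p w)) \<Longrightarrow> PF (\<lambda>p. Dw p g (h p))"
  unfolding Dw_def
  by (intro PF_sum PF_mult PF_diff PF_ofnat_pow) auto

lemma PF_S2: "(\<And>u w. PF (\<lambda>p. h p u w)) \<Longrightarrow> PF (\<lambda>p. S2 p g C \<nu> (h p))"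
  unfolding S2_def
  by (intro PF_add PF_Dw) auto

lemma PF_K1: "PF (\<lambda>p. K1 p g L \<mu> Ob)"
  unfolding K1_def by (intro PF_add PF_Dw PF_const)

lemma PF_Gr: "PF (\<lambda>p. Gr p i e r \<mu> \<nu> s')"
proof (cases "\<mu> = Mc e r")
  case True
  then show ?thesis unfolding Gr_def
    by (simp, intro PF_mult PF_power PF_id PF_S2 PF_const)
next
  case False
  then show ?thesis unfolding Gr_def
    by (simp, intro PF_mult PF_power PF_id PF_S2 PF_if PF_const PF_K1)
qed



definition Rows :: "nat \<Rightarrow> nat \<Rightarrow> nat \<Rightarrow> (nat \<times> nat) set" where
  "Rows i j r = {(t, s). 1 \<le> t \<and> t \<le> r \<and> (t < s \<and> s \<le> i \<or> s = j)}"

definition Good :: "nat \<Rightarrow> nat \<Rightarrow> nat \<Rightarrow> (nat \<Rightarrow> nat) \<Rightarrow> nat \<Rightarrow> (nat \<Rightarrow> nat \<Rightarrow> int) \<Rightarrow> (nat \<Rightarrow> int) \<Rightarrow> int \<Rightarrow> bool" where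
  "Good p i j e r a x \<beta> \<longleftrightarrow> (\<exists>y. (\<forall>s. r < s \<longrightarrow> y s = x s) \<and>
     (\<forall>t\<in>{1..r}. int p ^ e t * y t + (\<Sum>s\<in>{t<..<i}. int p * a t s * y s) = int p ^ 2 * a t i * (a t j - \<beta>)))"

definition Nc :: "nat \<Rightarrow> nat \<Rightarrow> nat \<Rightarrow> (nat \<Rightarrow> nat) \<Rightarrow> nat \<Rightarrow> (nat \<Rightarrow> int) \<Rightarrow> int \<Rightarrow> nat" where
  "Nc p i j e r x \<beta> = card {a \<in> Fs (Rows i j r) (bdv p e). Good p i j e r a x \<beta>}"

lemma Rows_finite: "finite (Rows i j r)"
proof -
  have "Rows i j r \<subseteq> {1..r} \<times> {..max i j}" unfolding Rows_def by auto
  then show ?thesis by (rule finite_subset) simp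
qed

lemma RowS_finite: "finite (RowS i j r)"
  unfolding RowS_def by simp

lemma Rows_split:
  assumes "1 \<le> r" "r < i" "i < j"
  shows "Rows i j r = Rows i j (r - 1) \<union> RowS i j r" "Rows i j (r - 1) \<inter> RowS i j r = {}"
  using assms unfolding Rows_def RowS_def by auto

lemma Good_0: "Good p i j e 0 a x \<beta>"
  unfolding Good_def by (rule exI[of _ x]) simp

lemma Good_step:
  assumes "prime p" "1 \<le> r"
  shows "Good p i j e r a x \<beta> \<longleftrightarrow> int p ^ e r dvd Tv p i j a x \<beta> r \<and>
           Good p i j e (r - 1) a (x(r := Tv p i j a x \<beta> r div int p ^ e r)) \<beta>"
proof -
  let ?T = "Tv p i j a x \<beta> r"
  let ?x' = "x(r := ?T div int p ^ e r)"
  have nz: "int p ^ e r \<noteq> 0" using assms(1) by (simp add: prime_gt_0_nat)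
  have r1: "{1..r} = insert r {1..r - 1}" using assms(2) by auto
  show ?thesis
  proof
    assume "Good p i j e r a x \<beta>"
    then obtain y where y: "\<forall>s. r < s \<longrightarrow> y s = x s"
      "\<forall>t\<in>{1..r}. int p ^ e t * y t + (\<Sum>s\<in>{t<..<i}. int p * a t s * y s) = int p ^ 2 * a t i * (a t j - \<beta>)"
      unfolding Good_def by blast
    have "int p ^ e r * y r + (\<Sum>s\<in>{r<..<i}. int p * a r s * y s) = int p ^ 2 * a r i * (a r j - \<beta>)"
      using y(2) assms(2) by auto
    moreover have "(\<Sum>s\<in>{r<..<i}. int p * a r s * y s) = (\<Sum>s\<in>{r<..<i}. int p * a r s * x s)"
      using y(1) by (intro sum.cong refl) auto
    ultimately have yr: "int p ^ e r * y r = ?T" unfolding Tv_def by linarith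
    then have d: "int p ^ e r dvd ?T" by (metis dvd_triv_left)
    have "y r = ?T div int p ^ e r" using yr nz by (metis nonzero_mult_div_cancel_left)
    then have "\<forall>s. r - 1 < s \<longrightarrow> y s = ?x' s" using y(1) assms(2) by auto
    moreover have "\<forall>t\<in>{1..r - 1}. int p ^ e t * y t + (\<Sum>s\<in>{t<..<i}. int p * a t s * y s) = int p ^ 2 * a t i * (a t j - \<beta>)"
      using y(2) by auto
    ultimately show "int p ^ e r dvd ?T \<and> Good p i j e (r - 1) a ?x' \<beta>" using d unfolding Good_def by blast
  next
    assume h: "int p ^ e r dvd ?T \<and> Good p i j e (r - 1) a ?x' \<beta>"
    then obtain y where y: "\<forall>s. r - 1 < s \<longrightarrow> y s = ?x' s"
      "\<forall>t\<in>{1..r - 1}. int p ^ e t * y t + (\<Sum>s\<in>{t<..<i}. int p * a t s * y s) = int p ^ 2 * a t i * (a t j - \<beta>)"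
      unfolding Good_def by blast
    have yr: "y r = ?T div int p ^ e r" using y(1) assms(2) by (metis fun_upd_same diff_less zero_less_one le_less_trans less_le_trans order_refl)
    have yr2: "int p ^ e r * y r = ?T" using yr h by simp
    have ys: "\<forall>s. r < s \<longrightarrow> y s = x s" using y(1) by auto
    have "(\<Sum>s\<in>{r<..<i}. int p * a r s * y s) = (\<Sum>s\<in>{r<..<i}. int p * a r s * x s)"
      using ys by (intro sum.cong refl) auto
    then have "int p ^ e r * y r + (\<Sum>s\<in>{r<..<i}. int p * a r s * y s) = int p ^ 2 * a r i * (a r j - \<beta>)"
      using yr2 unfolding Tv_def by linarith
    then have "\<forall>t\<in>{1..r}. int p ^ e t * y t + (\<Sum>s\<in>{t<..<i}. int p * a t s * y s) = int p ^ 2 * a t i * (a t j - \<beta>)"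
      using y(2) unfolding r1 by auto
    then show "Good p i j e r a x \<beta>" using ys unfolding Good_def by blast
  qed
qed

lemma Good_cong:
  assumes "r < i" "\<And>t s. 1 \<le> t \<Longrightarrow> t \<le> r \<Longrightarrow> (t < s \<and> s \<le> i \<or> s = j) \<Longrightarrow> a t s = a' t s"
  shows "Good p i j e r a x \<beta> = Good p i j e r a' x \<beta>"
proof -
  have "(int p ^ e t * y t + (\<Sum>s\<in>{t<..<i}. int p * a t s * y s) = int p ^ 2 * a t i * (a t j - \<beta>)) =
        (int p ^ e t * y t + (\<Sum>s\<in>{t<..<i}. int p * a' t s * y s) = int p ^ 2 * a' t i * (a' t j - \<beta>))"
    if "t \<in> {1..r}" for t y
  proof -
    have "(\<Sum>s\<in>{t<..<i}. int p * a t s * y s) = (\<Sum>s\<in>{t<..<i}. int p * a' t s * y s)"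
      using that assms by (intro sum.cong refl) auto
    moreover have "a t i = a' t i" "a t j = a' t j" using that assms by auto
    ultimately show ?thesis by simp
  qed
  then show ?thesis unfolding Good_def by (intro ex_cong1 conj_cong refl ball_cong) auto
qed

lemma Tv_cong:
  assumes "\<And>s. (r < s \<and> s \<le> i \<or> s = j) \<Longrightarrow> a r s = a' r s" "r < i"
  shows "Tv p i j a x \<beta> r = Tv p i j a' x \<beta> r"
proof -
  have "(\<Sum>s\<in>{r<..<i}. int p * a r s * x s) = (\<Sum>s\<in>{r<..<i}. int p * a' r s * x s)"
    using assms by (intro sum.cong refl) auto
  moreover have "a r i = a' r i" "a r j = a' r j" using assms by auto
  ultimately show ?thesis unfolding Tv_def by simp
qed

lemma Nc_step:
  assumes p: "prime p" and r: "1 \<le> r" "r < i" and ij: "i < j"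
  shows "(of_nat (Nc p i j e r x \<beta>) :: rat) = (\<Sum>f\<in>Fs (RowS i j r) (bdv p e).
            if int p ^ e r dvd Tv p i j f x \<beta> r
            then of_nat (Nc p i j e (r - 1) (x(r := Tv p i j f x \<beta> r div int p ^ e r)) \<beta>) else 0)"
proof -
  let ?bd = "bdv p e"
  have spl: "Rows i j r = Rows i j (r - 1) \<union> RowS i j r" "Rows i j (r - 1) \<inter> RowS i j r = {}"
    using Rows_split[OF r ij] by auto
  have "(of_nat (Nc p i j e r x \<beta>) :: rat) = (\<Sum>a\<in>Fs (Rows i j r) ?bd. of_bool (Good p i j e r a x \<beta>))"
    unfolding Nc_def by (rule card_filter_sum[OF Fs_finite[OF Rows_finite]])
  also have "\<dots> = (\<Sum>a1\<in>Fs (Rows i j (r - 1)) ?bd. \<Sum>f\<in>Fs (RowS i j r) ?bd. of_bool (Good p i j e r (padd a1 f) x \<beta>))"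
    unfolding spl(1) by (rule Fs_union_sum[OF spl(2)])
  also have "\<dots> = (\<Sum>f\<in>Fs (RowS i j r) ?bd. \<Sum>a1\<in>Fs (Rows i j (r - 1)) ?bd. of_bool (Good p i j e r (padd a1 f) x \<beta>))"
    by (rule sum.swap)
  also have "\<dots> = (\<Sum>f\<in>Fs (RowS i j r) ?bd.
            if int p ^ e r dvd Tv p i j f x \<beta> r
            then of_nat (Nc p i j e (r - 1) (x(r := Tv p i j f x \<beta> r div int p ^ e r)) \<beta>) else 0)"
  proof (rule sum.cong[OF refl])
    fix f assume f: "f \<in> Fs (RowS i j r) ?bd"
    let ?x' = "x(r := Tv p i j f x \<beta> r div int p ^ e r)"
    have eq: "Good p i j e r (padd a1 f) x \<beta> \<longleftrightarrow> int p ^ e r dvd Tv p i j f x \<beta> r \<and> Good p i j e (r - 1) a1 ?x' \<beta>"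
      if a1: "a1 \<in> Fs (Rows i j (r - 1)) ?bd" for a1
    proof -
      have "Tv p i j (padd a1 f) x \<beta> r = Tv p i j f x \<beta> r"
      proof (rule Tv_cong[OF _ r(2)])
        fix s assume "r < s \<and> s \<le> i \<or> s = j"
        have "(r, s) \<notin> Rows i j (r - 1)" unfolding Rows_def by auto
        then show "padd a1 f r s = f r s" using Fs_zero[OF a1] by (simp add: padd_def)
      qed
      moreover have "Good p i j e (r - 1) (padd a1 f) ?x' \<beta> = Good p i j e (r - 1) a1 ?x' \<beta>"
      proof (rule Good_cong)
        show "r - 1 < i" using r by simp
        fix t s assume "1 \<le> t" "t \<le> r - 1"
        then have "(t, s) \<notin> RowS i j r" unfolding RowS_def using r by auto
        then show "padd a1 f t s = a1 t s" using Fs_zero[OF f] by (simp add: padd_def)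
      qed
      ultimately show ?thesis using Good_step[OF p r(1), of i j e "padd a1 f" x \<beta>] by simp
    qed
    have "(\<Sum>a1\<in>Fs (Rows i j (r - 1)) ?bd. of_bool (Good p i j e r (padd a1 f) x \<beta>) :: rat)
        = (\<Sum>a1\<in>Fs (Rows i j (r - 1)) ?bd. of_bool (int p ^ e r dvd Tv p i j f x \<beta> r \<and> Good p i j e (r - 1) a1 ?x' \<beta>))"
      by (intro sum.cong refl) (simp add: eq)
    also have "\<dots> = (if int p ^ e r dvd Tv p i j f x \<beta> r then of_nat (Nc p i j e (r - 1) ?x' \<beta>) else 0)"
      unfolding Nc_def using card_filter_sum[OF Fs_finite[OF Rows_finite], of i j "r - 1" "bdv p e" "\<lambda>a1. Good p i j e (r - 1) a1 ?x' \<beta>"]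
      by simp
    finally show "(\<Sum>a1\<in>Fs (Rows i j (r - 1)) ?bd. of_bool (Good p i j e r (padd a1 f) x \<beta>) :: rat) =
         (if int p ^ e r dvd Tv p i j f x \<beta> r then of_nat (Nc p i j e (r - 1) ?x' \<beta>) else 0)" .
  qed
  finally show ?thesis .
qed



definition nu :: "nat \<Rightarrow> nat \<Rightarrow> (nat \<Rightarrow> nat) \<Rightarrow> int \<Rightarrow> (nat \<Rightarrow> nat)" where
  "nu p i e \<beta> = (\<lambda>t\<in>{1..i - 1}. vc p (Mc e i + 1) (\<beta> mod int p ^ (e t - 1) - \<beta>))"

lemma regroup:
  assumes "finite S" "finite W" "\<And>f. f \<in> S \<Longrightarrow> D f \<Longrightarrow> \<phi> f \<in> W"
  shows "(\<Sum>f\<in>S. if D f then h (\<phi> f) else 0) = (\<Sum>w\<in>W. of_nat (card {f\<in>S. D f \<and> \<phi> f = w}) * (h w :: rat))"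
proof -
  have "(\<Sum>f\<in>S. if D f then h (\<phi> f) else 0) = (\<Sum>f\<in>{f\<in>S. D f}. h (\<phi> f))"
    using sum.inter_filter[OF assms(1), of "\<lambda>f. h (\<phi> f)" D] by simp
  also have "\<dots> = (\<Sum>w\<in>W. of_nat (card {f\<in>{f\<in>S. D f}. \<phi> f = w}) * h w)"
    by (rule sum_group_card) (use assms in auto)
  also have "\<dots> = (\<Sum>w\<in>W. of_nat (card {f\<in>S. D f \<and> \<phi> f = w}) * h w)"
    by (intro sum.cong refl) (simp add: conj_assoc)
  finally show ?thesis .
qed

lemma Nc_0: "Nc p i j e 0 x \<beta> = 1"
proof -
  have "Rows i j 0 = {}" unfolding Rows_def by auto
  then show ?thesis unfolding Nc_def by (simp add: Fs_empty Good_0)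
qed

lemma dp:
  assumes ij: "i < j" and epos: "\<forall>t\<in>{1..i - 1}. 0 < e t"
  shows "r < i \<Longrightarrow> \<exists>Q. \<forall>p x \<beta>. prime p \<longrightarrow>
            (of_nat (Nc p i j e r x \<beta>) :: rat) = poly (Q (st p i e r x) (nu p i e \<beta>)) (of_nat p)"
proof (induction r)
  case 0
  show ?case by (rule exI[of _ "\<lambda>_ _. [:1:]"]) (simp add: Nc_0)
next
  case (Suc r)
  obtain Q' where Q': "\<And>p x \<beta>. prime p \<Longrightarrow>
      (of_nat (Nc p i j e r x \<beta>) :: rat) = poly (Q' (st p i e r x) (nu p i e \<beta>)) (of_nat p)"
    using Suc by auto
  obtain R where R: "\<And>z p. prime p \<Longrightarrow> Gr p i e (Suc r) (fst z) (fst (snd z)) (snd (snd z)) = poly (R z) (of_nat p)"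
    using PF_choice[of "\<lambda>z p. Gr p i e (Suc r) (fst z) (fst (snd z)) (snd (snd z))"] PF_Gr by blast
  define Q where "Q \<mu> \<nu> = (\<Sum>s'\<in>{..Mc e r}. R (\<mu>, \<nu> (Suc r), s') * Q' s' \<nu>)" for \<mu> \<nu>
  show ?case
  proof (rule exI[of _ Q], intro allI impI)
    fix p :: nat and x :: "nat \<Rightarrow> int" and \<beta> :: int assume p: "prime p"
    have r1: "1 \<le> Suc r" "Suc r < i" using Suc by auto
    have er: "0 < e (Suc r)" using epos r1 by auto
    let ?bd = "bdv p e"
    let ?D = "\<lambda>f. int p ^ e (Suc r) dvd Tv p i j f x \<beta> (Suc r)"
    let ?x' = "\<lambda>f. x(Suc r := Tv p i j f x \<beta> (Suc r) div int p ^ e (Suc r))"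
    let ?\<nu> = "nu p i e \<beta>"
    have nuv: "?\<nu> (Suc r) = vc p (Mc e i + 1) (\<beta> mod int p ^ (e (Suc r) - 1) - \<beta>)"
    proof -
      have "Suc r \<in> {1..i - 1}" using r1 by auto
      then show ?thesis unfolding nu_def by simp
    qed
    have "(of_nat (Nc p i j e (Suc r) x \<beta>) :: rat) = (\<Sum>f\<in>Fs (RowS i j (Suc r)) ?bd.
            if ?D f then of_nat (Nc p i j e r (?x' f) \<beta>) else 0)"
      using Nc_step[OF p r1 ij, of e x \<beta>] unfolding diff_Suc_1 .
    also have "\<dots> = (\<Sum>f\<in>Fs (RowS i j (Suc r)) ?bd. if ?D f then poly (Q' (st p i e r (?x' f)) ?\<nu>) (of_nat p) else 0)"
      by (rule sum.cong[OF refl], rule if_cong[OF refl], rule Q'[OF p], rule refl)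
    also have "\<dots> = (\<Sum>s'\<in>{..Mc e r}. of_nat (card {f\<in>Fs (RowS i j (Suc r)) ?bd. ?D f \<and> st p i e r (?x' f) = s'})
                      * poly (Q' s' ?\<nu>) (of_nat p))"
      by (rule regroup[where h="\<lambda>s'. poly (Q' s' ?\<nu>) (of_nat p)"]) (auto intro: Fs_finite RowS_finite st_le)
    also have "\<dots> = (\<Sum>s'\<in>{..Mc e r}. Gr p i e (Suc r) (st p i e (Suc r) x) (?\<nu> (Suc r)) s' * poly (Q' s' ?\<nu>) (of_nat p))"
    proof (intro sum.cong refl)
      fix s'
      show "of_nat (card {f\<in>Fs (RowS i j (Suc r)) ?bd. ?D f \<and> st p i e r (?x' f) = s'}) * poly (Q' s' ?\<nu>) (of_nat p)
          = Gr p i e (Suc r) (st p i e (Suc r) x) (?\<nu> (Suc r)) s' * poly (Q' s' ?\<nu>) (of_nat p)"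
        using row_count[where e=e and r="Suc r", OF p r1 ij er, of x \<beta> s'] unfolding nuv by simp
    qed
    also have "\<dots> = poly (Q (st p i e (Suc r) x) ?\<nu>) (of_nat p)"
      unfolding Q_def poly_sum poly_mult by (rule sum.cong[OF refl]) (simp add: R[OF p, symmetric])
    finally show "(of_nat (Nc p i j e (Suc r) x \<beta>) :: rat) = poly (Q (st p i e (Suc r) x) ?\<nu>) (of_nat p)" .
  qed
qed



definition digit :: "nat \<Rightarrow> nat \<Rightarrow> int \<Rightarrow> int" where
  "digit p q \<beta> = (\<beta> div int p ^ q) mod int p"

lemma digit_0: "digit p 0 \<beta> = \<beta> mod int p"
  by (simp add: digit_def)

lemma digit_Suc: "digit p (Suc q) \<beta> = digit p q (\<beta> div int p)"
  by (simp add: digit_def zdiv_zmult2_eq)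

lemma digit_shift: "digit p (q + g) \<beta> = digit p q (\<beta> div int p ^ g)"
  by (induction g arbitrary: \<beta>) (simp_all add: digit_Suc zdiv_zmult2_eq)

lemma pow_dvd_digits:
  assumes "prime p"
  shows "int p ^ n dvd \<beta> \<longleftrightarrow> (\<forall>q<n. digit p q \<beta> = 0)"
proof (induction n arbitrary: \<beta>)
  case 0
  then show ?case by simp
next
  case (Suc n)
  have pp: "0 < int p" using assms by (simp add: prime_gt_0_nat)
  show ?case
  proof (cases "int p ^ n dvd \<beta>")
    case True
    then obtain t where t: "\<beta> = int p ^ n * t" by (metis dvdE)
    have "digit p n \<beta> = t mod int p" unfolding digit_def t using pp by simp
    moreover have "int p ^ Suc n dvd \<beta> \<longleftrightarrow> int p dvd t"
      unfolding t using pp by (simp add: mult.commute)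
    ultimately show ?thesis using Suc.IH[of \<beta>] True by (auto simp: less_Suc_eq dvd_eq_mod_eq_0)
  next
    case False
    then have "\<not> int p ^ Suc n dvd \<beta>" using dvd_trans le_imp_power_dvd[of n "Suc n" "int p"] by auto
    then show ?thesis using Suc.IH[of \<beta>] False less_SucI by blast
  qed
qed

lemma pow_dvd_digits_high:
  assumes "prime p"
  shows "int p ^ m dvd (\<beta> mod int p ^ g - \<beta>) \<longleftrightarrow> (\<forall>d. g \<le> d \<and> d < m \<longrightarrow> digit p d \<beta> = 0)"
proof -
  have pg: "0 < int p ^ g" using assms by (simp add: prime_gt_0_nat)
  have z: "\<beta> mod int p ^ g - \<beta> = - (int p ^ g * (\<beta> div int p ^ g))"
    by (simp add: minus_mod_eq_mult_div[symmetric])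
  show ?thesis
  proof (cases "m \<le> g")
    case True
    have "int p ^ m dvd int p ^ g" using True by (rule le_imp_power_dvd)
    then show ?thesis unfolding z using True by auto
  next
    case False
    then have m: "m = (m - g) + g" by simp
    have "int p ^ m dvd (\<beta> mod int p ^ g - \<beta>) \<longleftrightarrow> int p ^ (m - g) dvd (\<beta> div int p ^ g)"
      unfolding z dvd_minus_iff using pg assms by (subst m) (simp add: power_add mult.commute prime_gt_0_nat)
    also have "\<dots> \<longleftrightarrow> (\<forall>q<m - g. digit p q (\<beta> div int p ^ g) = 0)" by (rule pow_dvd_digits[OF assms])
    also have "\<dots> \<longleftrightarrow> (\<forall>d. g \<le> d \<and> d < m \<longrightarrow> digit p d \<beta> = 0)"
    proof
      assume h: "\<forall>q<m - g. digit p q (\<beta> div int p ^ g) = 0"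
      show "\<forall>d. g \<le> d \<and> d < m \<longrightarrow> digit p d \<beta> = 0"
      proof (intro allI impI)
        fix d assume "g \<le> d \<and> d < m"
        then have "d - g < m - g" "d - g + g = d" by auto
        then show "digit p d \<beta> = 0" using h[rule_format, of "d - g"] digit_shift[of p "d - g" g \<beta>] by simp
      qed
    next
      assume h: "\<forall>d. g \<le> d \<and> d < m \<longrightarrow> digit p d \<beta> = 0"
      show "\<forall>q<m - g. digit p q (\<beta> div int p ^ g) = 0"
        using h digit_shift[of p _ g \<beta>] by (metis add.commute le_add1 less_diff_conv)
    qed
    finally show ?thesis .
  qed
qed

lemma vc_digits:
  assumes "prime p"
  shows "vc p C (\<beta> mod int p ^ g - \<beta>) = v \<longleftrightarrow>
         v \<le> C \<and> (\<forall>d. g \<le> d \<and> d < v \<longrightarrow> digit p d \<beta> = 0) \<and> (v < C \<longrightarrow> g \<le> v \<and> digit p v \<beta> \<noteq> 0)"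
    (is "?l \<longleftrightarrow> ?r")
proof -
  let ?z = "\<beta> mod int p ^ g - \<beta>"
  let ?Zr = "\<lambda>m. \<forall>d. g \<le> d \<and> d < m \<longrightarrow> digit p d \<beta> = 0"
  have Z: "int p ^ m dvd ?z \<longleftrightarrow> ?Zr m" for m by (rule pow_dvd_digits_high[OF assms])
  have mono: "?Zr m \<Longrightarrow> m' \<le> m \<Longrightarrow> ?Zr m'" for m m' by auto
  have Zs: "?Zr (Suc v) \<longleftrightarrow> ?Zr v \<and> (g \<le> v \<longrightarrow> digit p v \<beta> = 0)" for v
    by (auto simp: less_Suc_eq)
  show ?thesis
  proof
    assume l: ?l
    have "v \<le> C" using l vc_le by metis
    moreover have "?Zr v" using vc_dvd[of p C ?z] l Z by simp
    moreover have "g \<le> v \<and> digit p v \<beta> \<noteq> 0" if "v < C"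
    proof -
      have "\<not> int p ^ Suc v dvd ?z" using vc_lt[of p C ?z] l that by simp
      then have "\<not> ?Zr (Suc v)" using Z by blast
      with \<open>?Zr v\<close> show ?thesis using Zs by blast
    qed
    ultimately show ?r by blast
  next
    assume r: ?r
    show ?l
    proof (rule vc_eqI)
      show "v \<le> C" using r by simp
      fix m assume "m \<le> C"
      show "int p ^ m dvd ?z \<longleftrightarrow> m \<le> v"
      proof
        assume "int p ^ m dvd ?z"
        then have zm: "?Zr m" using Z by blast
        show "m \<le> v"
        proof (rule ccontr)
          assume "\<not> m \<le> v"
          then have "v < C" "Suc v \<le> m" using \<open>m \<le> C\<close> by auto
          then have "?Zr (Suc v)" using zm mono by blast
          then show False using r \<open>v < C\<close> Zs by blast
        qed
      next
        assume "m \<le> v"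
        then show "int p ^ m dvd ?z" using Z r mono by blast
      qed
    qed
  qed
qed



definition DC :: "(nat set) \<Rightarrow> (nat set) \<Rightarrow> nat \<Rightarrow> int \<Rightarrow> bool" where
  "DC Z NZ p \<beta> \<longleftrightarrow> (\<forall>d\<in>Z. digit p d \<beta> = 0) \<and> (\<forall>d\<in>NZ. digit p d \<beta> \<noteq> 0)"

lemma DC_Suc:
  "DC Z NZ p \<beta> \<longleftrightarrow> ((0 \<in> Z \<longrightarrow> \<beta> mod int p = 0) \<and> (0 \<in> NZ \<longrightarrow> \<beta> mod int p \<noteq> 0)) \<and>
      DC {q. Suc q \<in> Z} {q. Suc q \<in> NZ} p (\<beta> div int p)"
proof -
  have a: "(\<forall>d\<in>Z. P d) \<longleftrightarrow> (0 \<in> Z \<longrightarrow> P 0) \<and> (\<forall>q\<in>{q. Suc q \<in> Z}. P (Suc q))" for P :: "nat \<Rightarrow> bool" and Z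
    by (metis mem_Collect_eq not0_implies_Suc)
  show ?thesis unfolding DC_def a[of Z] a[of NZ] by (auto simp: digit_0 digit_Suc)
qed

lemma card_c0:
  assumes "prime p"
  shows "card {d\<in>{0..<int p}. (0 \<in> Z \<longrightarrow> d = 0) \<and> (0 \<in> NZ \<longrightarrow> d \<noteq> 0)} =
         (if 0 \<in> Z \<and> 0 \<in> NZ then 0 else if 0 \<in> Z then 1 else if 0 \<in> NZ then p - 1 else p)"
proof -
  have pp: "0 < int p" using assms by (simp add: prime_gt_0_nat)
  consider "0 \<in> Z \<and> 0 \<in> NZ" | "0 \<in> Z \<and> 0 \<notin> NZ" | "0 \<notin> Z \<and> 0 \<in> NZ" | "0 \<notin> Z \<and> 0 \<notin> NZ" by blast
  then show ?thesis
  proof cases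
    case 1 then show ?thesis by simp
  next
    case 2
    then have "{d\<in>{0..<int p}. (0 \<in> Z \<longrightarrow> d = 0) \<and> (0 \<in> NZ \<longrightarrow> d \<noteq> 0)} = {0}" using pp by auto
    then show ?thesis using 2 by simp
  next
    case 3
    then have "{d\<in>{0..<int p}. (0 \<in> Z \<longrightarrow> d = 0) \<and> (0 \<in> NZ \<longrightarrow> d \<noteq> 0)} = {1..<int p}" by auto
    then show ?thesis using 3 by simp
  next
    case 4
    then have "{d\<in>{0..<int p}. (0 \<in> Z \<longrightarrow> d = 0) \<and> (0 \<in> NZ \<longrightarrow> d \<noteq> 0)} = {0..<int p}" by auto
    then show ?thesis using 4 by simp
  qed
qed

lemma card_DC_Suc:
  assumes "prime p"
  shows "card {\<beta>\<in>{0..<int p ^ Suc E}. DC Z NZ p \<beta>} =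
         card {d\<in>{0..<int p}. (0 \<in> Z \<longrightarrow> d = 0) \<and> (0 \<in> NZ \<longrightarrow> d \<noteq> 0)} *
         card {\<beta>\<in>{0..<int p ^ E}. DC {q. Suc q \<in> Z} {q. Suc q \<in> NZ} p \<beta>}"
proof -
  let ?h = "\<lambda>\<beta>. (\<beta> mod int p, \<beta> div int p)"
  let ?S = "{\<beta>\<in>{0..<int p ^ Suc E}. DC Z NZ p \<beta>}"
  let ?A = "{d\<in>{0..<int p}. (0 \<in> Z \<longrightarrow> d = 0) \<and> (0 \<in> NZ \<longrightarrow> d \<noteq> 0)}"
  let ?B = "{\<beta>\<in>{0..<int p ^ E}. DC {q. Suc q \<in> Z} {q. Suc q \<in> NZ} p \<beta>}"
  have pp: "0 < int p" using assms by (simp add: prime_gt_0_nat)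
  have inj: "inj_on ?h ?S"
  proof (rule inj_onI)
    fix a b assume "?h a = ?h b"
    then show "a = b" by (metis div_mult_mod_eq prod.inject)
  qed
  have img: "?h ` ?S = ?A \<times> ?B"
  proof (intro set_eqI iffI)
    fix z assume "z \<in> ?h ` ?S"
    then obtain \<beta> where b: "\<beta> \<in> ?S" "z = ?h \<beta>" by blast
    have "\<beta> div int p < int p ^ E"
    proof (rule ccontr)
      assume "\<not> \<beta> div int p < int p ^ E"
      then have "int p * int p ^ E \<le> int p * (\<beta> div int p)" using pp by (intro mult_left_mono) auto
      also have "\<dots> \<le> \<beta>" using pp by (metis div_mult_mod_eq le_add_same_cancel1 mult.commute pos_mod_sign)
      finally show False using b(1) by simp
    qed
    moreover have "0 \<le> \<beta> div int p" using b(1) pp by (simp add: pos_imp_zdiv_nonneg_iff)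
    ultimately show "z \<in> ?A \<times> ?B" using b pp DC_Suc[of Z NZ p \<beta>] by auto
  next
    fix z assume z: "z \<in> ?A \<times> ?B"
    obtain d b' where zz: "z = (d, b')" by (cases z)
    define \<beta> where "\<beta> = d + int p * b'"
    have dm: "\<beta> mod int p = d" "\<beta> div int p = b'" using z zz pp unfolding \<beta>_def by auto
    have "0 \<le> \<beta>" using z zz pp unfolding \<beta>_def by auto
    moreover have "\<beta> < int p ^ Suc E"
    proof -
      have "b' + 1 \<le> int p ^ E" using z zz by auto
      then have "int p * (b' + 1) \<le> int p * int p ^ E" using pp by (intro mult_left_mono) auto
      then show ?thesis using z zz unfolding \<beta>_def by (auto simp: algebra_simps)
    qed
    moreover have "DC Z NZ p \<beta>" using DC_Suc[of Z NZ p \<beta>] dm z zz by auto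
    ultimately show "z \<in> ?h ` ?S" using dm zz by (intro image_eqI[of _ _ \<beta>]) auto
  qed
  have "card ?S = card (?h ` ?S)" using inj by (simp add: card_image)
  also have "\<dots> = card ?A * card ?B" unfolding img by (rule card_cartesian_product)
  finally show ?thesis .
qed

lemma PF_DC: "PF (\<lambda>p. of_nat (card {\<beta>\<in>{0..<int p ^ E}. DC Z NZ p \<beta>}))"
proof (induction E arbitrary: Z NZ)
  case 0
  have pf: "PF (\<lambda>p. if NZ = {} then 1 else 0)" by (rule PF_if) (rule PF_const)+
  have eq: "(of_nat (card {\<beta>\<in>{0..<int p ^ 0}. DC Z NZ p \<beta>}) :: rat) = (if NZ = {} then 1 else 0)" for p
  proof -
    have e: "{0..<int p ^ 0} = {0::int}" by auto
    have "DC Z NZ p 0 \<longleftrightarrow> NZ = {}" by (auto simp: DC_def digit_def)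
    then have "{\<beta>\<in>{0..<int p ^ 0}. DC Z NZ p \<beta>} = (if NZ = {} then {0} else {})"
      unfolding e by auto
    then show ?thesis by simp
  qed
  show ?case by (rule PF_cong[OF pf]) (rule eq[symmetric])
next
  case (Suc E)
  let ?c = "\<lambda>p. (if 0 \<in> Z \<and> 0 \<in> NZ then 0 else if 0 \<in> Z then 1 else if 0 \<in> NZ then of_nat p - 1 else of_nat p) :: rat"
  have "PF ?c" by (intro PF_if PF_const PF_id PF_diff)
  then have "PF (\<lambda>p. ?c p * of_nat (card {\<beta>\<in>{0..<int p ^ E}. DC {q. Suc q \<in> Z} {q. Suc q \<in> NZ} p \<beta>}))"
    using Suc.IH by (rule PF_mult)
  then show ?case
  proof (rule PF_cong)
    fix p :: nat assume p: "prime p"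
    have "p \<ge> 1" using prime_ge_1_nat[OF p] by simp
    then have "of_nat (card {d\<in>{0..<int p}. (0 \<in> Z \<longrightarrow> d = 0) \<and> (0 \<in> NZ \<longrightarrow> d \<noteq> 0)}) = ?c p"
      unfolding card_c0[OF p] by (simp add: of_nat_diff)
    then show "?c p * of_nat (card {\<beta>\<in>{0..<int p ^ E}. DC {q. Suc q \<in> Z} {q. Suc q \<in> NZ} p \<beta>})
         = of_nat (card {\<beta>\<in>{0..<int p ^ Suc E}. DC Z NZ p \<beta>})"
      unfolding card_DC_Suc[OF p] by simp
  qed
qed



lemma restrict_eq_iff: "\<nu> \<in> extensional A \<Longrightarrow> (restrict f A = \<nu> \<longleftrightarrow> (\<forall>x\<in>A. f x = \<nu> x))"
  by (auto simp: fun_eq_iff extensional_def restrict_def)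

lemma nu_count_PF:
  assumes "\<nu> \<in> PiE {1..i - 1} (\<lambda>_. {0..Mc e i + 1})"
  shows "PF (\<lambda>p. of_nat (card {\<beta>\<in>{0..<int p ^ G}. nu p i e \<beta> = \<nu>}))"
proof -
  define C where "C = Mc e i + 1"
  define K where "K = {1..i - 1}"
  define Feas where "Feas = (\<forall>t\<in>K. \<nu> t < C \<longrightarrow> e t - 1 \<le> \<nu> t)"
  define Zv where "Zv = {d. \<exists>t\<in>K. e t - 1 \<le> d \<and> d < \<nu> t}"
  define NZv where "NZv = {d. \<exists>t\<in>K. \<nu> t < C \<and> d = \<nu> t}"
  have le: "\<forall>t\<in>K. \<nu> t \<le> C" using assms unfolding K_def C_def by (auto simp: PiE_iff)
  have ext: "\<nu> \<in> extensional K" using assms unfolding K_def by (simp add: PiE_iff)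
  have pf: "PF (\<lambda>p. if Feas then of_nat (card {\<beta>\<in>{0..<int p ^ G}. DC Zv NZv p \<beta>}) else 0)"
    by (intro PF_if PF_DC PF_const)
  show ?thesis
  proof (rule PF_cong[OF pf])
    fix p :: nat assume p: "prime p"
    have eq: "nu p i e \<beta> = \<nu> \<longleftrightarrow> Feas \<and> DC Zv NZv p \<beta>" for \<beta>
    proof -
      have "nu p i e \<beta> = \<nu> \<longleftrightarrow> (\<forall>t\<in>K. vc p C (\<beta> mod int p ^ (e t - 1) - \<beta>) = \<nu> t)"
        unfolding nu_def K_def[symmetric] C_def[symmetric] by (rule restrict_eq_iff[OF ext])
      also have "\<dots> \<longleftrightarrow> (\<forall>t\<in>K. (\<forall>d. e t - 1 \<le> d \<and> d < \<nu> t \<longrightarrow> digit p d \<beta> = 0) \<and>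
                               (\<nu> t < C \<longrightarrow> e t - 1 \<le> \<nu> t \<and> digit p (\<nu> t) \<beta> \<noteq> 0))"
        using vc_digits[OF p] le by auto
      also have "\<dots> \<longleftrightarrow> Feas \<and> DC Zv NZv p \<beta>"
        unfolding Feas_def DC_def Zv_def NZv_def by blast
      finally show ?thesis .
    qed
    show "(if Feas then of_nat (card {\<beta>\<in>{0..<int p ^ G}. DC Zv NZv p \<beta>}) else 0) =
          of_nat (card {\<beta>\<in>{0..<int p ^ G}. nu p i e \<beta> = \<nu>})"
      unfolding eq by simp
  qed
qed

lemma final_sum_PF:
  assumes "\<And>p \<beta>. prime p \<Longrightarrow> (of_nat (N p \<beta>) :: rat) = poly (Q (nu p i e \<beta>)) (of_nat p)"
  shows "PF (\<lambda>p. \<Sum>\<beta>\<in>{0..<int p ^ G}. of_nat (N p \<beta>))"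
proof -
  let ?V = "PiE {1..i - 1} (\<lambda>_. {0..Mc e i + 1})"
  have finV: "finite ?V" by (intro finite_PiE) auto
  have pf: "PF (\<lambda>p. \<Sum>\<nu>\<in>?V. of_nat (card {\<beta>\<in>{0..<int p ^ G}. nu p i e \<beta> = \<nu>}) * poly (Q \<nu>) (of_nat p))"
  proof (rule PF_sum[OF finV])
    fix \<nu> assume "\<nu> \<in> ?V"
    then show "PF (\<lambda>p. of_nat (card {\<beta>\<in>{0..<int p ^ G}. nu p i e \<beta> = \<nu>}) * poly (Q \<nu>) (of_nat p))"
      by (intro PF_mult nu_count_PF) (auto simp: PF_def)
  qed
  show ?thesis
  proof (rule PF_cong[OF pf])
    fix p :: nat assume p: "prime p"
    have "(\<Sum>\<beta>\<in>{0..<int p ^ G}. of_nat (N p \<beta>) :: rat) = (\<Sum>\<beta>\<in>{0..<int p ^ G}. (\<lambda>\<nu>. poly (Q \<nu>) (of_nat p)) (nu p i e \<beta>))"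
      using assms[OF p] by simp
    also have "\<dots> = (\<Sum>\<nu>\<in>?V. of_nat (card {\<beta>\<in>{0..<int p ^ G}. nu p i e \<beta> = \<nu>}) * poly (Q \<nu>) (of_nat p))"
    proof (rule sum_group_card)
      show "nu p i e ` {0..<int p ^ G} \<subseteq> ?V"
        unfolding nu_def by (auto simp: vc_le)
    qed (use finV in auto)
    finally show "(\<Sum>\<nu>\<in>?V. of_nat (card {\<beta>\<in>{0..<int p ^ G}. nu p i e \<beta> = \<nu>}) * poly (Q \<nu>) (of_nat p)) =
                  (\<Sum>\<beta>\<in>{0..<int p ^ G}. of_nat (N p \<beta>))" by simp
  qed
qed



lemma A_lower: "s < r \<Longrightarrow> s \<noteq> n \<Longrightarrow> Amat n p e a r s = 0"
  by (simp add: Amat_def)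
lemma A_diag: "r \<noteq> n \<Longrightarrow> Amat n p e a r r = int p ^ e r"
  by (simp add: Amat_def)
lemma A_upper: "r < s \<Longrightarrow> s \<noteq> n \<Longrightarrow> Amat n p e a r s = int p * a r s"
  by (simp add: Amat_def)

lemma row_sum_split:
  fixes t i :: nat
  assumes "t < i"
  shows "(\<Sum>s\<in>{t..i}. f s) = f t + (\<Sum>s\<in>{t<..<i}. f s) + (f i :: int)"
proof -
  have "{t..i} = insert t (insert i {t<..<i})" using assms by auto
  then show ?thesis using assms by (simp add: algebra_simps)
qed

lemma colspan_iff:
  assumes "1 \<le> i" "i < n" "j < n" "prime p"
  shows "in_col_span n (Amat n p e a) (\<lambda>r. Amat n p e a r i * Amat n p e a r j)
     \<longleftrightarrow> (\<exists>y. \<forall>t\<in>{1..i}. (\<Sum>s\<in>{t..i}. Amat n p e a t s * y s) = Amat n p e a t i * Amat n p e a t j)"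
proof
  let ?A = "Amat n p e a"
  have pz: "int p ^ k \<noteq> 0" for k using assms(4) by (simp add: prime_gt_0_nat)
  assume "in_col_span n ?A (\<lambda>r. ?A r i * ?A r j)"
  then obtain x where H: "\<forall>r\<in>{1..n}. ?A r i * ?A r j = (\<Sum>s=1..n. ?A r s * x s)"
    unfolding in_col_span_def by blast
  have zero: "x s = 0" if "i < s" "s \<le> n" for s
    using that
  proof (induction "n - s" arbitrary: s rule: less_induct)
    case less
    have w: "?A s i * ?A s j = 0" using less.prems assms by (simp add: A_lower)
    have "(\<Sum>s'=1..n. ?A s s' * x s') = ?A s s * x s"
    proof -
      have "(\<Sum>s'\<in>{1..n}. ?A s s' * x s') = ?A s s * x s + (\<Sum>s'\<in>{1..n} - {s}. ?A s s' * x s')"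
        using less.prems assms by (subst sum.remove[of _ s]) auto
      also have "(\<Sum>s'\<in>{1..n} - {s}. ?A s s' * x s') = 0"
      proof (rule sum.neutral, rule ballI)
        fix s' assume s': "s' \<in> {1..n} - {s}"
        show "?A s s' * x s' = 0"
        proof (cases "s' < s")
          case True then show ?thesis using less.prems by (simp add: A_lower)
        next
          case False
          then have "s < s'" using s' by auto
          then have "x s' = 0" using less.hyps[of s'] less.prems s' by auto
          then show ?thesis by simp
        qed
      qed
      finally show ?thesis by simp
    qed
    then have "?A s s * x s = 0" using H less.prems w assms by auto
    moreover have "?A s s \<noteq> 0" using pz by (cases "s = n") (simp_all add: Amat_def)
    ultimately show ?case by simp
  qed
  show "\<exists>y. \<forall>t\<in>{1..i}. (\<Sum>s\<in>{t..i}. ?A t s * y s) = ?A t i * ?A t j"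
  proof (rule exI[of _ x], rule ballI)
    fix t assume t: "t \<in> {1..i}"
    have "(\<Sum>s\<in>{t..i}. ?A t s * x s) = (\<Sum>s\<in>{1..n}. ?A t s * x s)"
    proof (rule sum.mono_neutral_left)
      show "\<forall>s\<in>{1..n} - {t..i}. ?A t s * x s = 0"
      proof
        fix s assume s: "s \<in> {1..n} - {t..i}"
        show "?A t s * x s = 0"
        proof (cases "s < t")
          case True then show ?thesis using t assms by (simp add: A_lower)
        next
          case False then show ?thesis using s zero by auto
        qed
      qed
    qed (use t assms in auto)
    then show "(\<Sum>s\<in>{t..i}. ?A t s * x s) = ?A t i * ?A t j" using H t assms by auto
  qed
next
  let ?A = "Amat n p e a"
  assume "\<exists>y. \<forall>t\<in>{1..i}. (\<Sum>s\<in>{t..i}. ?A t s * y s) = ?A t i * ?A t j"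
  then obtain y where y: "\<forall>t\<in>{1..i}. (\<Sum>s\<in>{t..i}. ?A t s * y s) = ?A t i * ?A t j" by blast
  define x where "x s = (if s \<le> i then y s else 0)" for s
  show "in_col_span n ?A (\<lambda>r. ?A r i * ?A r j)"
    unfolding in_col_span_def
  proof (rule exI[of _ x], rule ballI)
    fix r assume r: "r \<in> {1..n}"
    show "?A r i * ?A r j = (\<Sum>s=1..n. ?A r s * x s)"
    proof (cases "r \<le> i")
      case True
      have "(\<Sum>s\<in>{r..i}. ?A r s * x s) = (\<Sum>s\<in>{1..n}. ?A r s * x s)"
      proof (rule sum.mono_neutral_left)
        show "\<forall>s\<in>{1..n} - {r..i}. ?A r s * x s = 0"
        proof
          fix s assume s: "s \<in> {1..n} - {r..i}"
          show "?A r s * x s = 0"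
          proof (cases "s < r")
            case True then show ?thesis using r assms \<open>r \<le> i\<close> by (simp add: A_lower)
          next
            case False then show ?thesis using s by (auto simp: x_def)
          qed
        qed
      qed (use r assms True in auto)
      moreover have "(\<Sum>s\<in>{r..i}. ?A r s * x s) = (\<Sum>s\<in>{r..i}. ?A r s * y s)"
        by (intro sum.cong refl) (auto simp: x_def)
      ultimately show ?thesis using y r True by auto
    next
      case False
      have "(\<Sum>s\<in>{1..n}. ?A r s * x s) = 0"
      proof (rule sum.neutral, rule ballI)
        fix s assume "s \<in> {1..n}"
        show "?A r s * x s = 0"
        proof (cases "s \<le> i")
          case True then show ?thesis using False assms by (simp add: A_lower)
        next
          case False then show ?thesis by (simp add: x_def)
        qed
      qed
      moreover have "?A r i = 0" using False assms by (simp add: A_lower)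
      ultimately show ?thesis by simp
    qed
  qed
qed

lemma tri_good:
  assumes "1 \<le> i" "i < j" "j < n" "prime p"
  shows "(\<exists>y. \<forall>t\<in>{1..i}. (\<Sum>s\<in>{t..i}. Amat n p e a t s * y s) = Amat n p e a t i * Amat n p e a t j)
     \<longleftrightarrow> Good p i j e (i - 1) a (\<lambda>_. 0) (a i j)"
proof -
  let ?A = "Amat n p e a"
  let ?P = "int p"
  have pz: "?P ^ k \<noteq> 0" for k using assms(4) by (simp add: prime_gt_0_nat)
  have in_: "i \<noteq> n" using assms by simp
  have Ait: "?A t i = ?P * a t i" if "t < i" for t using that in_ by (simp add: A_upper)
  have Ajt: "?A t j = ?P * a t j" if "t \<le> i" for t using that assms by (simp add: A_upper)
  have Aii: "?A i i = ?P ^ e i" using in_ by (simp add: A_diag)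
  have Att: "?A t t = ?P ^ e t" if "t < i" for t using that assms by (simp add: A_diag)
  have Ats: "?A t s = ?P * a t s" if "t < s" "s < i" for t s using that assms by (simp add: A_upper)
  have rowt: "(\<Sum>s\<in>{t..i}. ?A t s * y s) = ?P ^ e t * y t + (\<Sum>s\<in>{t<..<i}. ?P * a t s * y s) + ?P * a t i * y i"
    if "t < i" for t y
  proof -
    have "(\<Sum>s\<in>{t..i}. ?A t s * y s) = ?A t t * y t + (\<Sum>s\<in>{t<..<i}. ?A t s * y s) + ?A t i * y i"
      by (rule row_sum_split[OF that])
    moreover have "(\<Sum>s\<in>{t<..<i}. ?A t s * y s) = (\<Sum>s\<in>{t<..<i}. ?P * a t s * y s)"
      by (intro sum.cong refl) (simp add: Ats)
    ultimately show ?thesis using Att[OF that] Ait[OF that] by simp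
  qed
  have rowi: "(\<Sum>s\<in>{i..i}. ?A i s * y s) = ?P ^ e i * y i" for y using Aii by simp
  show ?thesis
  proof
    assume "\<exists>y. \<forall>t\<in>{1..i}. (\<Sum>s\<in>{t..i}. ?A t s * y s) = ?A t i * ?A t j"
    then obtain y where y: "\<forall>t\<in>{1..i}. (\<Sum>s\<in>{t..i}. ?A t s * y s) = ?A t i * ?A t j" by blast
    have "?P ^ e i * y i = ?P ^ e i * (?P * a i j)" using y[rule_format, of i] assms rowi Aii Ajt[of i] by simp
    then have yi: "y i = ?P * a i j" using pz[of "e i"] by (metis mult_left_cancel)
    define y' where "y' s = (if s < i then y s else 0)" for s
    show "Good p i j e (i - 1) a (\<lambda>_. 0) (a i j)"
      unfolding Good_def
    proof (rule exI[of _ y'], intro conjI allI impI ballI)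
      fix s assume "i - 1 < s" then show "y' s = 0" by (simp add: y'_def)
    next
      fix t assume t: "t \<in> {1..i - 1}"
      then have ti: "t < i" using assms by auto
      have "(\<Sum>s\<in>{t<..<i}. ?P * a t s * y' s) = (\<Sum>s\<in>{t<..<i}. ?P * a t s * y s)"
        by (intro sum.cong refl) (simp add: y'_def)
      moreover have "?P ^ e t * y t + (\<Sum>s\<in>{t<..<i}. ?P * a t s * y s) + ?P * a t i * y i = ?P * a t i * (?P * a t j)"
        using y[rule_format, of t] t ti rowt[OF ti, of y] Ait[OF ti] Ajt[of t] by simp
      ultimately show "?P ^ e t * y' t + (\<Sum>s\<in>{t<..<i}. ?P * a t s * y' s) = ?P ^ 2 * a t i * (a t j - a i j)"
        using ti yi by (simp add: y'_def algebra_simps power2_eq_square)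
    qed
  next
    assume "Good p i j e (i - 1) a (\<lambda>_. 0) (a i j)"
    then obtain y where y: "\<forall>t\<in>{1..i - 1}. ?P ^ e t * y t + (\<Sum>s\<in>{t<..<i}. ?P * a t s * y s) = ?P ^ 2 * a t i * (a t j - a i j)"
      unfolding Good_def by blast
    define y' where "y' = y(i := ?P * a i j)"
    show "\<exists>y. \<forall>t\<in>{1..i}. (\<Sum>s\<in>{t..i}. ?A t s * y s) = ?A t i * ?A t j"
    proof (rule exI[of _ y'], rule ballI)
      fix t assume t: "t \<in> {1..i}"
      show "(\<Sum>s\<in>{t..i}. ?A t s * y' s) = ?A t i * ?A t j"
      proof (cases "t = i")
        case True
        then show ?thesis using rowi[of y'] Aii Ajt[of i] by (simp add: y'_def)
      next
        case False
        then have ti: "t < i" using t by auto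
        have "(\<Sum>s\<in>{t<..<i}. ?P * a t s * y' s) = (\<Sum>s\<in>{t<..<i}. ?P * a t s * y s)"
          by (intro sum.cong refl) (simp add: y'_def)
        moreover have "t \<in> {1..i - 1}" using t ti by auto
        ultimately show ?thesis using rowt[OF ti, of y'] y[rule_format, of t] ti Ait[OF ti] Ajt[of t]
          by (simp add: y'_def algebra_simps power2_eq_square)
      qed
    qed
  qed
qed



lemma full_assign_Fs: "full_assign n p e = Fs {(r, s). 1 \<le> r \<and> r < s \<and> s \<le> n - 1} (bdv p e)"
  unfolding full_assign_def Fs_def bdv_def by auto

lemma restrict_vars_rs: "restrict_vars L = rs L"
  by (simp add: restrict_vars_def rs_def fun_eq_iff)

lemma listed_split:
  assumes "1 \<le> i" "i < j"
  shows "listed_vars i j = Rows i j (i - 1) \<union> {(i, j)}" "Rows i j (i - 1) \<inter> {(i, j)} = {}"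
  using assms unfolding listed_vars_def Rows_def by auto

lemma cond_iff:
  assumes "1 \<le> i" "i < j" "j \<le> n - 1" "n \<ge> 3" "prime p"
  shows "in_col_span n (Amat n p e a) (\<lambda>r. Amat n p e a r i * Amat n p e a r j) \<longleftrightarrow>
         Good p i j e (i - 1) a (\<lambda>_. 0) (a i j)"
proof -
  have "i < n" "j < n" using assms by auto
  then show ?thesis using colspan_iff[OF assms(1) \<open>i < n\<close> \<open>j < n\<close> assms(5)] tri_good[OF assms(1,2) \<open>j < n\<close> assms(5)]
    by simp
qed

lemma Good_rs:
  assumes "1 \<le> i" "i < j"
  shows "Good p i j e (i - 1) (rs (listed_vars i j) a) (\<lambda>_. 0) (rs (listed_vars i j) a i j) =
         Good p i j e (i - 1) a (\<lambda>_. 0) (a i j)"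
proof -
  have "rs (listed_vars i j) a i j = a i j" using assms by (simp add: rs_def listed_vars_def)
  moreover have "Good p i j e (i - 1) (rs (listed_vars i j) a) (\<lambda>_. 0) \<beta> = Good p i j e (i - 1) a (\<lambda>_. 0) \<beta>" for \<beta>
    by (rule Good_cong) (use assms in \<open>auto simp: rs_def listed_vars_def\<close>)
  ultimately show ?thesis by simp
qed

lemma good_choices_eq:
  assumes "1 \<le> i" "i < j" "j \<le> n - 1" "n \<ge> 3" "prime p"
  shows "good_choices n i j e p = {b \<in> Fs (listed_vars i j) (bdv p e). Good p i j e (i - 1) b (\<lambda>_. 0) (b i j)}"
proof -
  let ?L = "listed_vars i j"
  let ?F = "{(r, s). 1 \<le> r \<and> r < s \<and> s \<le> n - 1}"
  have LF: "?L \<subseteq> ?F" using assms unfolding listed_vars_def by auto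
  have c: "in_col_span n (Amat n p e a) (\<lambda>r. Amat n p e a r i * Amat n p e a r j) \<longleftrightarrow>
         Good p i j e (i - 1) a (\<lambda>_. 0) (a i j)" for a by (rule cond_iff[OF assms])
  show ?thesis
  proof (intro set_eqI iffI)
    fix b assume "b \<in> good_choices n i j e p"
    then obtain a where a: "a \<in> Fs ?F (bdv p e)" "Good p i j e (i - 1) a (\<lambda>_. 0) (a i j)" "b = rs ?L a"
      unfolding good_choices_def full_assign_Fs restrict_vars_rs c by blast
    have "b \<in> Fs ?L (bdv p e)" using a(1,3) rs_Fs LF by blast
    moreover have "Good p i j e (i - 1) b (\<lambda>_. 0) (b i j)" using a(2,3) Good_rs[OF assms(1,2)] by simp
    ultimately show "b \<in> {b \<in> Fs ?L (bdv p e). Good p i j e (i - 1) b (\<lambda>_. 0) (b i j)}" by simp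
  next
    fix b assume b: "b \<in> {b \<in> Fs ?L (bdv p e). Good p i j e (i - 1) b (\<lambda>_. 0) (b i j)}"
    have pos: "0 < int p ^ k" for k using assms(5) by (simp add: prime_gt_0_nat)
    have bL: "b \<in> Fs ?L (bdv p e)" using b by simp
    have r1: "0 \<le> b r s \<and> b r s < bdv p e r" if "(r, s) \<in> ?F" for r s
    proof (cases "(r, s) \<in> ?L")
      case True then show ?thesis using Fs_range[OF bL] by blast
    next
      case False then show ?thesis using Fs_zero[OF bL] pos[of "e r - 1"] unfolding bdv_def by simp
    qed
    have r2: "b r s = 0" if "(r, s) \<notin> ?F" for r s
      using that LF Fs_zero[OF bL] by blast
    have "b \<in> Fs ?F (bdv p e)" unfolding Fs_def using r1 r2 by blast
    moreover have "rs ?L b = b" using b unfolding Fs_def rs_def by (auto simp: fun_eq_iff)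
    ultimately show "b \<in> good_choices n i j e p"
      unfolding good_choices_def full_assign_Fs restrict_vars_rs c using b by (auto intro: image_eqI[of _ _ b])
  qed
qed



lemma listed_finite: "finite (listed_vars i j)"
proof -
  have "listed_vars i j \<subseteq> {..i} \<times> {..max i j}" unfolding listed_vars_def by auto
  then show ?thesis by (rule finite_subset) simp
qed

lemma card_good:
  assumes a: "1 \<le> i" "i < j" "j \<le> n - 1" "n \<ge> 3" "prime p"
  shows "(of_nat (card (good_choices n i j e p)) :: rat)
       = (\<Sum>\<beta>\<in>{0..<int p ^ (e i - 1)}. of_nat (Nc p i j e (i - 1) (\<lambda>_. 0) \<beta>))"
proof -
  let ?bd = "bdv p e"
  let ?G = "\<lambda>b. Good p i j e (i - 1) b (\<lambda>_. 0) (b i j)"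
  have spl: "listed_vars i j = Rows i j (i - 1) \<union> {(i, j)}" "Rows i j (i - 1) \<inter> {(i, j)} = {}"
    using listed_split[OF a(1,2)] by auto
  have "(of_nat (card (good_choices n i j e p)) :: rat) = (\<Sum>b\<in>Fs (listed_vars i j) ?bd. of_bool (?G b))"
    unfolding good_choices_eq[OF a] by (rule card_filter_sum[OF Fs_finite[OF listed_finite]])
  also have "\<dots> = (\<Sum>a1\<in>Fs (Rows i j (i - 1)) ?bd. \<Sum>f\<in>Fs {(i, j)} ?bd. of_bool (?G (padd a1 f)))"
    unfolding spl(1) by (rule Fs_union_sum[OF spl(2)])
  also have "\<dots> = (\<Sum>a1\<in>Fs (Rows i j (i - 1)) ?bd. \<Sum>\<beta>\<in>{0..<?bd i}. of_bool (?G (padd a1 (pt i j \<beta>))))"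
    by (intro sum.cong refl Fs_single_sum)
  also have "\<dots> = (\<Sum>a1\<in>Fs (Rows i j (i - 1)) ?bd. \<Sum>\<beta>\<in>{0..<?bd i}. of_bool (Good p i j e (i - 1) a1 (\<lambda>_. 0) \<beta>))"
  proof (intro sum.cong refl)
    fix a1 \<beta> assume a1: "a1 \<in> Fs (Rows i j (i - 1)) ?bd"
    have "(i, j) \<notin> Rows i j (i - 1)" unfolding Rows_def by auto
    then have "padd a1 (pt i j \<beta>) i j = \<beta>" using Fs_zero[OF a1] by (simp add: padd_def pt_def)
    moreover have "Good p i j e (i - 1) (padd a1 (pt i j \<beta>)) (\<lambda>_. 0) \<beta> = Good p i j e (i - 1) a1 (\<lambda>_. 0) \<beta>"
      by (rule Good_cong) (use a in \<open>auto simp: padd_def pt_def\<close>)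
    ultimately show "(of_bool (?G (padd a1 (pt i j \<beta>))) :: rat) = of_bool (Good p i j e (i - 1) a1 (\<lambda>_. 0) \<beta>)"
      by simp
  qed
  also have "\<dots> = (\<Sum>\<beta>\<in>{0..<?bd i}. \<Sum>a1\<in>Fs (Rows i j (i - 1)) ?bd. of_bool (Good p i j e (i - 1) a1 (\<lambda>_. 0) \<beta>))"
    by (rule sum.swap)
  also have "\<dots> = (\<Sum>\<beta>\<in>{0..<int p ^ (e i - 1)}. of_nat (Nc p i j e (i - 1) (\<lambda>_. 0) \<beta>))"
    unfolding Nc_def bdv_def
    by (intro sum.cong refl card_filter_sum[symmetric] Fs_finite Rows_finite)
  finally show ?thesis .
qed

theorem proposition3p2:
  fixes n i j :: nat and e :: "nat \<Rightarrow> nat"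
  assumes "n \<ge> 3" and "1 \<le> i" and "i < j" and "j \<le> n - 1"
    and "\<forall>r\<in>{1..n-1}. e r > 0"
  shows "\<exists>P :: rat poly. \<forall>p :: nat. prime p \<longrightarrow>
           of_nat (card (good_choices n i j e p)) = poly P (of_nat p)"
proof -
  have epos: "\<forall>t\<in>{1..i - 1}. 0 < e t" using assms by auto
  obtain Q where Q: "\<And>p x \<beta>. prime p \<Longrightarrow>
      (of_nat (Nc p i j e (i - 1) x \<beta>) :: rat) = poly (Q (st p i e (i - 1) x) (nu p i e \<beta>)) (of_nat p)"
    using dp[OF assms(3) epos, of "i - 1"] assms(2) by auto
  have st0: "st p i e (i - 1) (\<lambda>_. 0) = Mc e (i - 1)" for p
  proof -
    have "{i - 1<..<i} = {}" using assms(2) by auto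
    then show ?thesis unfolding st_def by simp
  qed
  have "PF (\<lambda>p. \<Sum>\<beta>\<in>{0..<int p ^ (e i - 1)}. of_nat (Nc p i j e (i - 1) (\<lambda>_. 0) \<beta>))"
  proof (rule final_sum_PF[where Q="Q (Mc e (i - 1))" and i=i and e=e])
    fix p :: nat and \<beta> :: int assume "prime p"
    then show "(of_nat (Nc p i j e (i - 1) (\<lambda>_. 0) \<beta>) :: rat) = poly (Q (Mc e (i - 1)) (nu p i e \<beta>)) (of_nat p)"
      using Q[of p "\<lambda>_. 0" \<beta>] unfolding st0 by blast
  qed
  then have "PF (\<lambda>p. of_nat (card (good_choices n i j e p)))"
    by (rule PF_cong) (simp add: card_good[OF assms(2,3,4,1)])
  then show ?thesis unfolding PF_def by blast
qed


end
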